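(* If $X\subset\mathbb{R}^2$ is a planar self-affine set whose tuple of linear parts is dominated or irreducible, then $\mathcal{H}^s(X)<\infty$ where $s=\dim_{\mathrm{aff}}(X)$.
   Context: An affine iterated function system is a tuple $(\varphi_1,\dots,\varphi_N)$, $N\ge2$, with $\varphi_i(x)=A_ix+v_i$, $A_i\in GL_2(\mathbb{R})$, $\|A_i\|<1$; its self-affine set $X$ is the unique nonempty compact set with $X=\bigcup_i\varphi_i(X)$; properties of $\mathsf{A}=(A_1,\dots,A_N)$ are attributed to $X$. For $\mathtt{i}=i_1\cdots i_n$, $A_{\mathtt{i}}=A_{i_1}\cdots A_{i_n}$; $\Sigma_n$ is the set of words of length $n$, $\Sigma_*$ all finite words; $\alpha_1\ge\alpha_2$ singular values. Dominated: $\exists C>0,0<\tau<1$ with $\alpha_2(A_{\mathtt{i}})\le C\tau^{|\mathtt{i}|}\alpha_1(A_{\mathtt{i}})$ for all $\mathtt{i}\in\Sigma_*$. Irreducible: no line through the origin invariant under all $A_i$. Singular value function: $\varphi^s(A)=\alpha_1(A)^s$ for $0\le s\le1$, $\alpha_1(A)\alpha_2(A)^{s-1}$ for $1<s\le2$, $(\alpha_1(A)\alpha_2(A))^{s/2}$ for $s>2$. $P(\mathsf{A},s)=\lim_n\frac1n\log\sum_{\mathtt{i}\in\Sigma_n}\varphi^s(A_{\mathtt{i}})$, and $\dim_{\mathrm{aff}}(X)$ is the unique $s\ge0$ with $P(\mathsf{A},s)=0$. *)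

theory Defs
  imports "HOL-Analysis.Analysis"
begin

type_synonym mat2 = "real^2^2"

definition ata_eigenvalues :: "mat2 \<Rightarrow> real set" where
  "ata_eigenvalues A = {l. \<exists>x::real^2. x \<noteq> 0 \<and> (transpose A ** A) *v x = l *\<^sub>R x}"

definition sv1 :: "mat2 \<Rightarrow> real" where
  "sv1 A = sqrt (Max (ata_eigenvalues A))"

definition sv2 :: "mat2 \<Rightarrow> real" where
  "sv2 A = sqrt (Min (ata_eigenvalues A))"

definition opnorm :: "mat2 \<Rightarrow> real" where
  "opnorm A = onorm (\<lambda>x::real^2. A *v x)"

definition svf :: "real \<Rightarrow> mat2 \<Rightarrow> real" where
  "svf s A = (if s \<le> 1 then sv1 A powr s
              else if s \<le> 2 then sv1 A * sv2 A powr (s - 1)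
              else (sv1 A * sv2 A) powr (s / 2))"

definition words :: "nat \<Rightarrow> nat \<Rightarrow> nat list set" where
  "words N n = {w. length w = n \<and> set w \<subseteq> {..<N}}"

definition all_words :: "nat \<Rightarrow> nat list set" where
  "all_words N = {w. set w \<subseteq> {..<N}}"

definition matprod :: "(nat \<Rightarrow> mat2) \<Rightarrow> nat list \<Rightarrow> mat2" where
  "matprod A w = foldr (\<lambda>i M. A i ** M) w (mat 1)"

definition affine_ifs :: "nat \<Rightarrow> (nat \<Rightarrow> mat2) \<Rightarrow> (nat \<Rightarrow> real^2) \<Rightarrow> bool" where
  "affine_ifs N A v \<longleftrightarrow> N \<ge> 2 \<and> (\<forall>i<N. invertible (A i) \<and> opnorm (A i) < 1)"

definition is_self_affine_set ::
  "nat \<Rightarrow> (nat \<Rightarrow> mat2) \<Rightarrow> (nat \<Rightarrow> real^2) \<Rightarrow> (real^2) set \<Rightarrow> bool" where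
  "is_self_affine_set N A v X \<longleftrightarrow> affine_ifs N A v \<and> compact X \<and> X \<noteq> {} \<and>
     X = (\<Union>i<N. (\<lambda>x. A i *v x + v i) ` X)"

definition dominated :: "nat \<Rightarrow> (nat \<Rightarrow> mat2) \<Rightarrow> bool" where
  "dominated N A \<longleftrightarrow> (\<exists>C \<tau>. C > 0 \<and> 0 < \<tau> \<and> \<tau> < 1 \<and>
     (\<forall>w\<in>all_words N. sv2 (matprod A w) \<le> C * \<tau> ^ length w * sv1 (matprod A w)))"

definition irreducible_tuple :: "nat \<Rightarrow> (nat \<Rightarrow> mat2) \<Rightarrow> bool" where
  "irreducible_tuple N A \<longleftrightarrow> \<not> (\<exists>L::(real^2) set. subspace L \<and> dim L = 1 \<and>
     (\<forall>i<N. (\<lambda>x. A i *v x) ` L \<subseteq> L))"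

definition pressure :: "nat \<Rightarrow> (nat \<Rightarrow> mat2) \<Rightarrow> real \<Rightarrow> real" where
  "pressure N A s = lim (\<lambda>n. ln (\<Sum>w\<in>words N n. svf s (matprod A w)) / real n)"

definition affinity_dim :: "nat \<Rightarrow> (nat \<Rightarrow> mat2) \<Rightarrow> real" where
  "affinity_dim N A = (THE s. s \<ge> 0 \<and> pressure N A s = 0)"

text \<open>diam(U)^s with the conventions diam(empty)^s = 0 and 0^0 = 1.\<close>
definition diam_pow :: "real \<Rightarrow> 'a::metric_space set \<Rightarrow> real" where
  "diam_pow s U = (if U = {} then 0 else if s = 0 then 1 else diameter U powr s)"

definition hausdorff_content ::
  "real \<Rightarrow> real \<Rightarrow> 'a::metric_space set \<Rightarrow> ennreal" where
  "hausdorff_content s \<delta> E = (INF U \<in> {U :: nat \<Rightarrow> 'a set.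
       E \<subseteq> (\<Union>n. U n) \<and> (\<forall>n. bounded (U n) \<and> diameter (U n) \<le> \<delta>)}.
       (\<Sum>n. ennreal (diam_pow s (U n))))"

definition hausdorff_measure :: "real \<Rightarrow> 'a::metric_space set \<Rightarrow> ennreal" where
  "hausdorff_measure s E = (SUP \<delta> \<in> {0<..}. hausdorff_content s \<delta> E)"

end

theory Submission
  imports Defs
begin


lemma mv2: fixes A :: "real^2^2" shows
  "(A *v x) $ 1 = A$1$1 * x$1 + A$1$2 * x$2"
  "(A *v x) $ 2 = A$2$1 * x$1 + A$2$2 * x$2"
  by (simp_all add: matrix_vector_mult_def sum_2)

lemma mm2: fixes A B :: "real^2^2" shows
  "(A ** B) $ 1 $ 1 = A$1$1 * B$1$1 + A$1$2 * B$2$1"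
  "(A ** B) $ 1 $ 2 = A$1$1 * B$1$2 + A$1$2 * B$2$2"
  "(A ** B) $ 2 $ 1 = A$2$1 * B$1$1 + A$2$2 * B$2$1"
  "(A ** B) $ 2 $ 2 = A$2$1 * B$1$2 + A$2$2 * B$2$2"
  by (simp_all add: matrix_matrix_mult_def sum_2)

lemma norm2: fixes x :: "real^2" shows "norm x = sqrt ((x$1)^2 + (x$2)^2)"
  by (simp add: norm_vec_def L2_set_def sum_2)

lemma norm2_sq: fixes x :: "real^2" shows "(norm x)^2 = (x$1)^2 + (x$2)^2"
  by (simp add: norm2)

lemma vec2_eq: fixes x y :: "real^2" shows "x = y \<longleftrightarrow> x$1 = y$1 \<and> x$2 = y$2"
  by (simp add: vec_eq_iff forall_2)

lemma inner2: fixes x y :: "real^2" shows "inner x y = x$1 * y$1 + x$2 * y$2"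
  by (simp add: inner_vec_def sum_2)


definition pA :: "mat2 \<Rightarrow> real" where "pA A = (A$1$1)^2 + (A$2$1)^2"
definition qA :: "mat2 \<Rightarrow> real" where "qA A = A$1$1 * A$1$2 + A$2$1 * A$2$2"
definition rA :: "mat2 \<Rightarrow> real" where "rA A = (A$1$2)^2 + (A$2$2)^2"
definition SA :: "mat2 \<Rightarrow> real" where "SA A = sqrt ((pA A - rA A)^2 + 4 * (qA A)^2)"
definition lp :: "mat2 \<Rightarrow> real" where "lp A = (pA A + rA A + SA A) / 2"
definition lm :: "mat2 \<Rightarrow> real" where "lm A = (pA A + rA A - SA A) / 2"

lemma ata_mv: fixes A :: mat2 shows
  "((transpose A ** A) *v x) $ 1 = pA A * x$1 + qA A * x$2"
  "((transpose A ** A) *v x) $ 2 = qA A * x$1 + rA A * x$2"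
  by (simp_all add: mv2 mm2 transpose_def pA_def qA_def rA_def algebra_simps power2_eq_square)

lemma det_pqr: "pA A * rA A - (qA A)^2 = (det A)^2"
  by (simp add: det_2 pA_def qA_def rA_def algebra_simps power2_eq_square)

lemma eig_char: "l \<in> ata_eigenvalues A \<longleftrightarrow> (pA A - l) * (rA A - l) = (qA A)^2"
proof
  assume "l \<in> ata_eigenvalues A"
  then obtain x :: "real^2" where x0: "x \<noteq> 0" and e: "(transpose A ** A) *v x = l *\<^sub>R x"
    by (auto simp: ata_eigenvalues_def)
  have e1: "(pA A - l) * x$1 + qA A * x$2 = 0" and e2: "qA A * x$1 + (rA A - l) * x$2 = 0"
    using arg_cong[OF e, of "\<lambda>v. v$1"] arg_cong[OF e, of "\<lambda>v. v$2"]
    by (simp_all add: ata_mv algebra_simps)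
  have "((pA A - l) * (rA A - l) - (qA A)^2) * x$1 = (rA A - l) * ((pA A - l) * x$1 + qA A * x$2) - qA A * (qA A * x$1 + (rA A - l) * x$2)"
    by (simp add: algebra_simps power2_eq_square)
  hence h1: "((pA A - l) * (rA A - l) - (qA A)^2) * x$1 = 0" using e1 e2 by simp
  have "((pA A - l) * (rA A - l) - (qA A)^2) * x$2 = (pA A - l) * (qA A * x$1 + (rA A - l) * x$2) - qA A * ((pA A - l) * x$1 + qA A * x$2)"
    by (simp add: algebra_simps power2_eq_square)
  hence h2: "((pA A - l) * (rA A - l) - (qA A)^2) * x$2 = 0" using e1 e2 by simp
  have "x$1 \<noteq> 0 \<or> x$2 \<noteq> 0" using x0 by (auto simp: vec2_eq)
  thus "(pA A - l) * (rA A - l) = (qA A)^2" using h1 h2 by auto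
next
  assume h: "(pA A - l) * (rA A - l) = (qA A)^2"
  obtain x :: "real^2" where x0: "x \<noteq> 0" and e1: "(pA A - l) * x$1 + qA A * x$2 = 0" and e2: "qA A * x$1 + (rA A - l) * x$2 = 0"
  proof (cases "qA A = 0")
    case False
    let ?x = "vector [qA A, l - pA A] :: real^2"
    have "?x \<noteq> 0" using False by (auto simp: vec2_eq)
    moreover have "(pA A - l) * ?x$1 + qA A * ?x$2 = 0" by (simp add: algebra_simps)
    moreover have "qA A * ?x$1 + (rA A - l) * ?x$2 = 0" using h
      by (simp add: algebra_simps power2_eq_square)
    ultimately show ?thesis using that by blast
  next
    case True
    hence "pA A = l \<or> rA A = l" using h by simp
    thus ?thesis
    proof
      assume "pA A = l"
      thus ?thesis using that[of "vector [1, 0]"] True by (auto simp: vec2_eq)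
    next
      assume "rA A = l"
      thus ?thesis using that[of "vector [0, 1]"] True by (auto simp: vec2_eq)
    qed
  qed
  have "(transpose A ** A) *v x = l *\<^sub>R x"
    using e1 e2 by (simp add: vec2_eq ata_mv algebra_simps)
  thus "l \<in> ata_eigenvalues A" using x0 by (auto simp: ata_eigenvalues_def)
qed

lemma SA_nonneg: "SA A \<ge> 0" by (simp add: SA_def)

lemma SA_sq: "(SA A)^2 = (pA A - rA A)^2 + 4 * (qA A)^2"
  by (simp add: SA_def)

lemma eig_set: "ata_eigenvalues A = {lp A, lm A}"
proof -
  have id: "(2*l - pA A - rA A)^2 - (SA A)^2 = 4 * ((pA A - l) * (rA A - l) - (qA A)^2)" for l
    unfolding SA_sq by (simp add: power2_eq_square algebra_simps)
  have "(pA A - l) * (rA A - l) = (qA A)^2 \<longleftrightarrow> (2*l - pA A - rA A)^2 = (SA A)^2" for l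
  proof -
    have "(pA A - l) * (rA A - l) = (qA A)^2 \<longleftrightarrow> 4 * ((pA A - l) * (rA A - l) - (qA A)^2) = 0" by simp
    also have "... \<longleftrightarrow> (2*l - pA A - rA A)^2 - (SA A)^2 = 0" using id[of l] by simp
    finally show ?thesis by simp
  qed
  also have "... l \<longleftrightarrow> (2*l - pA A - rA A = SA A \<or> 2*l - pA A - rA A = - SA A)" for l
    by (metis power2_eq_iff)
  finally have h: "(pA A - l) * (rA A - l) = (qA A)^2 \<longleftrightarrow> l = lp A \<or> l = lm A" for l
    unfolding lp_def lm_def by (simp add: field_simps)
  show ?thesis unfolding set_eq_iff eig_char h by simp
qed

lemma pr_nonneg: "pA A \<ge> 0" "rA A \<ge> 0" by (simp_all add: pA_def rA_def)

lemma lm_nonneg: "lm A \<ge> 0"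
proof -
  have "(pA A + rA A)^2 - (SA A)^2 = 4 * (pA A * rA A - (qA A)^2)"
    unfolding SA_sq by (simp add: power2_eq_square algebra_simps)
  hence h: "(pA A + rA A)^2 - (SA A)^2 = 4 * (det A)^2" using det_pqr[of A] by simp
  have "(SA A)^2 \<le> (pA A + rA A)^2" using h by (smt (verit) zero_le_power2)
  hence "SA A \<le> pA A + rA A" using pr_nonneg[of A] SA_nonneg[of A]
    by (meson add_nonneg_nonneg power2_le_imp_le)
  thus ?thesis by (simp add: lm_def)
qed

lemma lm_le_lp: "lm A \<le> lp A" using SA_nonneg[of A] by (simp add: lm_def lp_def)

lemma sv1_eq: "sv1 A = sqrt (lp A)"
  by (simp add: sv1_def eig_set lm_le_lp max_absorb1)
lemma sv2_eq: "sv2 A = sqrt (lm A)"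
  by (simp add: sv2_def eig_set lm_le_lp min_absorb2)

lemma lp_lm: "lp A * lm A = (det A)^2"
proof -
  have "lp A * lm A = ((pA A + rA A)^2 - (SA A)^2) / 4"
    by (simp add: lp_def lm_def algebra_simps power2_eq_square)
  also have "... = pA A * rA A - (qA A)^2" unfolding SA_sq by (simp add: field_simps power2_eq_square)
  finally show ?thesis using det_pqr by simp
qed

lemma sv_prod: "sv1 A * sv2 A = \<bar>det A\<bar>"
  by (simp add: sv1_eq sv2_eq real_sqrt_mult[symmetric] lp_lm del: real_sqrt_mult)

lemma lp_nonneg: "lp A \<ge> 0" using lm_nonneg[of A] lm_le_lp[of A] by linarith

lemma sv1_nonneg: "sv1 A \<ge> 0" and sv2_nonneg: "sv2 A \<ge> 0"
  by (simp_all add: sv1_eq sv2_eq lp_nonneg lm_nonneg)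

lemma sv2_le_sv1: "sv2 A \<le> sv1 A"
  by (simp add: sv1_eq sv2_eq lm_le_lp)

lemma normAx_sq: fixes A :: mat2 shows
  "(norm (A *v x))^2 = pA A * (x$1)^2 + 2 * qA A * x$1 * x$2 + rA A * (x$2)^2"
  unfolding norm2_sq mv2 pA_def qA_def rA_def by (simp add: algebra_simps power2_eq_square)

lemma lp_ge: "lp A \<ge> pA A" "lp A \<ge> rA A"
proof -
  have "\<bar>pA A - rA A\<bar> \<le> SA A" unfolding SA_def
    by (metis add.commute add_increasing le_add_same_cancel2 mult_nonneg_nonneg
        real_sqrt_abs real_sqrt_le_mono zero_le_numeral zero_le_power2)
  thus "lp A \<ge> pA A" "lp A \<ge> rA A" by (auto simp: lp_def)
qed

lemma sv1_bound: "norm (A *v x) \<le> sv1 A * norm x"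
proof -
  define a where "a = lp A - pA A"
  define g where "g = lp A - rA A"
  define q where "q = qA A"
  have a0: "a \<ge> 0" and g0: "g \<ge> 0" using lp_ge[of A] by (auto simp: a_def g_def)
  have ag: "a * g = q^2"
    using eig_char[of "lp A" A] eig_set[of A] by (simp add: a_def g_def q_def algebra_simps)
  have key: "a * (x$1)^2 - 2 * q * x$1 * x$2 + g * (x$2)^2 \<ge> 0"
  proof (cases "a = 0")
    case True
    hence "q = 0" using ag by simp
    thus ?thesis using True g0 by simp
  next
    case False
    hence ap: "a > 0" using a0 by simp
    have "a * (a * (x$1)^2 - 2 * q * x$1 * x$2 + g * (x$2)^2) = (a * x$1 - q * x$2)^2"
      using ag by (simp add: algebra_simps power2_eq_square)
    hence "a * (a * (x$1)^2 - 2 * q * x$1 * x$2 + g * (x$2)^2) \<ge> 0" by simp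
    thus ?thesis using ap by (simp add: zero_le_mult_iff)
  qed
  have "lp A * (norm x)^2 - (norm (A *v x))^2 = a * (x$1)^2 - 2 * q * x$1 * x$2 + g * (x$2)^2"
    unfolding normAx_sq unfolding norm2_sq a_def g_def q_def by (simp add: algebra_simps power2_eq_square)
  hence "(norm (A *v x))^2 \<le> lp A * (norm x)^2" using key by linarith
  also have "... = (sv1 A * norm x)^2"
    using lm_nonneg[of A] lm_le_lp[of A] by (simp add: sv1_eq power_mult_distrib)
  finally show ?thesis
    by (meson mult_nonneg_nonneg norm_ge_zero power2_le_imp_le sv1_nonneg)
qed

lemma sv1_attained: "\<exists>x::real^2. norm x = 1 \<and> norm (A *v x) = sv1 A"
proof -
  have "lp A \<in> ata_eigenvalues A" by (simp add: eig_set)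
  then obtain x :: "real^2" where x0: "x \<noteq> 0" and e: "(transpose A ** A) *v x = lp A *\<^sub>R x"
    by (auto simp: ata_eigenvalues_def)
  have e1: "pA A * x$1 + qA A * x$2 = lp A * x$1" and e2: "qA A * x$1 + rA A * x$2 = lp A * x$2"
    using arg_cong[OF e, of "\<lambda>v. v$1"] arg_cong[OF e, of "\<lambda>v. v$2"]
    by (simp_all add: ata_mv)
  have "(norm (A *v x))^2 = x$1 * (pA A * x$1 + qA A * x$2) + x$2 * (qA A * x$1 + rA A * x$2)"
    unfolding normAx_sq by (simp add: algebra_simps power2_eq_square)
  also have "... = lp A * (norm x)^2" unfolding e1 e2 norm2_sq by (simp add: algebra_simps power2_eq_square)
  finally have h: "(norm (A *v x))^2 = (sv1 A * norm x)^2"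
    using lm_nonneg[of A] lm_le_lp[of A] by (simp add: sv1_eq power_mult_distrib)
  hence h2: "norm (A *v x) = sv1 A * norm x"
    by (metis norm_ge_zero mult_nonneg_nonneg sv1_nonneg power2_eq_iff_nonneg)
  define y where "y = x /\<^sub>R norm x"
  have "norm y = 1" using x0 by (simp add: y_def)
  moreover have "norm (A *v y) = sv1 A" using x0 h2
    by (simp add: y_def matrix_vector_mult_scaleR)
  ultimately show ?thesis by blast
qed


lemma matprod_Nil[simp]: "matprod A [] = mat 1" by (simp add: matprod_def)
lemma matprod_Cons[simp]: "matprod A (i#w) = A i ** matprod A w" by (simp add: matprod_def)
lemma matprod_append: "matprod A (w@v) = matprod A w ** matprod A v"
  by (induction w) (simp_all add: matrix_mul_assoc)

lemma sv1_submult: "sv1 (P ** Q) \<le> sv1 P * sv1 Q"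
proof -
  obtain x :: "real^2" where x: "norm x = 1" "norm ((P ** Q) *v x) = sv1 (P ** Q)"
    using sv1_attained by blast
  have "norm ((P ** Q) *v x) = norm (P *v (Q *v x))" by (simp add: matrix_vector_mul_assoc)
  also have "... \<le> sv1 P * norm (Q *v x)" by (rule sv1_bound)
  also have "... \<le> sv1 P * (sv1 Q * norm x)" by (simp add: mult_left_mono sv1_bound sv1_nonneg)
  finally show ?thesis using x by simp
qed

lemma sv1_le_opnorm: "sv1 P \<le> opnorm P"
proof -
  obtain x :: "real^2" where x: "norm x = 1" "norm (P *v x) = sv1 P"
    using sv1_attained by blast
  have "norm (P *v x) \<le> onorm ((*v) P) * norm x"
    by (rule onorm[OF matrix_vector_mul_bounded_linear])
  thus ?thesis using x by (simp add: opnorm_def)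
qed

lemma sv_pos: assumes "det P \<noteq> 0" shows "sv1 P > 0" "sv2 P > 0"
  using sv_prod[of P] sv1_nonneg[of P] sv2_nonneg[of P] assms
  by (metis abs_eq_0 less_eq_real_def mult_eq_0_iff)+

lemma sv2_det: assumes "det P \<noteq> 0" shows "sv2 P = \<bar>det P\<bar> / sv1 P"
  using sv_prod[of P] sv_pos[OF assms] by (simp add: field_simps)

lemma sv1_id: "sv1 (mat 1) = 1"
proof -
  obtain x :: "real^2" where x: "norm x = 1" "norm ((mat 1) *v x) = sv1 (mat 1)"
    using sv1_attained by blast
  thus ?thesis by simp
qed

lemma words_eq: "words N n = {xs. set xs \<subseteq> {..<N} \<and> length xs = n}"
  by (auto simp: words_def)
lemma words_finite[simp]: "finite (words N n)"
  unfolding words_eq by (rule finite_lists_length_eq) simp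
lemma words_card: "card (words N n) = N^n"
  unfolding words_eq by (simp add: card_lists_length_eq)
lemma words_0: "words N 0 = {[]}" by (auto simp: words_def)
lemma words_in_all: "w \<in> words N n \<Longrightarrow> w \<in> all_words N" by (simp add: words_def all_words_def)
lemma all_words_words: "w \<in> all_words N \<Longrightarrow> w \<in> words N (length w)" by (simp add: words_def all_words_def)

lemma words_append_bij: "bij_betw (\<lambda>(x,y). x@y) (words N n \<times> words N m) (words N (n+m))"
proof (rule bij_betwI')
  fix a b assume "a \<in> words N n \<times> words N m" "b \<in> words N n \<times> words N m"
  thus "((\<lambda>(x, y). x @ y) a = (\<lambda>(x, y). x @ y) b) = (a = b)"
    by (cases a; cases b) (auto simp: words_def)
next
  fix a assume "a \<in> words N n \<times> words N m"
  thus "(\<lambda>(x, y). x @ y) a \<in> words N (n + m)" by (cases a) (auto simp: words_def)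
next
  fix w assume w: "w \<in> words N (n + m)"
  show "\<exists>a\<in>words N n \<times> words N m. w = (\<lambda>(x, y). x @ y) a"
    apply (rule bexI[of _ "(take n w, drop n w)"])
    using w by (auto simp: words_def dest: in_set_takeD in_set_dropD)
qed

lemma sum_words_append: "(\<Sum>w\<in>words N (n+m). f w) = (\<Sum>x\<in>words N n. \<Sum>y\<in>words N m. f (x@y))"
proof -
  have "(\<Sum>w\<in>words N (n+m). f w) = (\<Sum>p\<in>words N n \<times> words N m. f ((\<lambda>(x,y). x@y) p))"
    using sum.reindex_bij_betw[OF words_append_bij, of f] by simp
  also have "... = (\<Sum>x\<in>words N n. \<Sum>y\<in>words N m. f (x@y))"
    by (simp add: sum.cartesian_product split_def)
  finally show ?thesis .
qed

definition uu :: "real \<Rightarrow> real" where "uu s = min s 1 + max (s - 2) 0 / 2"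

lemma uu_eq: "uu s = (if s \<le> 1 then s else if s \<le> 2 then 1 else s / 2)"
  by (auto simp: uu_def min_def max_def field_simps)

lemma uu_props: assumes "s \<ge> 0" shows "0 \<le> uu s" "uu s \<le> s" "2 * uu s - s \<ge> 0" "s - uu s \<ge> 0"
  using assms by (auto simp: uu_eq)

lemma uu_shift: assumes "s \<ge> 0" "t \<ge> 0" shows "uu s \<le> uu (s+t)" "uu (s+t) \<le> uu s + t"
  using assms by (auto simp: uu_eq)

lemma svf_alt: assumes "det P \<noteq> 0" "s \<ge> 0"
  shows "svf s P = sv1 P powr uu s * sv2 P powr (s - uu s)"
proof -
  have p1: "sv1 P > 0" and p2: "sv2 P > 0" using sv_pos[OF assms(1)] by auto
  show ?thesis
  proof (cases "s \<le> 1")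
    case True thus ?thesis using p1 p2 by (simp add: svf_def uu_eq)
  next
    case False
    show ?thesis
    proof (cases "s \<le> 2")
      case True thus ?thesis using False p1 p2 by (simp add: svf_def uu_eq)
    next
      case F2: False
      have u: "uu s = s/2" using False F2 by (simp add: uu_eq)
      have "s - s/2 = s/2" by simp
      thus ?thesis unfolding u using False F2 p1 p2 by (simp add: svf_def powr_mult)
    qed
  qed
qed

lemma svf_alt2: assumes "det P \<noteq> 0" "s \<ge> 0"
  shows "svf s P = sv1 P powr (2 * uu s - s) * \<bar>det P\<bar> powr (s - uu s)"
proof -
  have p1: "sv1 P > 0" and p2: "sv2 P > 0" using sv_pos[OF assms(1)] by auto
  have "\<bar>det P\<bar> powr (s - uu s) = sv1 P powr (s - uu s) * sv2 P powr (s - uu s)"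
    using sv_prod[of P] p1 p2 by (simp add: powr_mult[symmetric])
  hence "sv1 P powr (2 * uu s - s) * \<bar>det P\<bar> powr (s - uu s)
     = (sv1 P powr (2 * uu s - s) * sv1 P powr (s - uu s)) * sv2 P powr (s - uu s)" by simp
  also have "... = sv1 P powr uu s * sv2 P powr (s - uu s)"
    using p1 by (simp add: powr_add[symmetric])
  finally show ?thesis using svf_alt[OF assms] by simp
qed

lemma svf_pos: assumes "det P \<noteq> 0" shows "svf s P > 0"
  using sv_pos[OF assms] by (simp add: svf_def)

lemma svf_0: assumes "det P \<noteq> 0" shows "svf 0 P = 1"
  using sv_pos[OF assms] by (simp add: svf_def)

lemma svf_submult: assumes "det P \<noteq> 0" "det Q \<noteq> 0" "s \<ge> 0"
  shows "svf s (P ** Q) \<le> svf s P * svf s Q"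
proof -
  have dPQ: "det (P ** Q) \<noteq> 0" using assms by (simp add: det_mul)
  have e: "2 * uu s - s \<ge> 0" using uu_props[OF assms(3)] by simp
  have "sv1 (P ** Q) powr (2 * uu s - s) \<le> (sv1 P * sv1 Q) powr (2 * uu s - s)"
    by (rule powr_mono2[OF e sv1_nonneg sv1_submult])
  also have "... = sv1 P powr (2 * uu s - s) * sv1 Q powr (2 * uu s - s)"
    by (simp add: powr_mult sv1_nonneg)
  finally have h: "sv1 (P ** Q) powr (2 * uu s - s) \<le> sv1 P powr (2 * uu s - s) * sv1 Q powr (2 * uu s - s)" .
  have d: "\<bar>det (P ** Q)\<bar> powr (s - uu s) = \<bar>det P\<bar> powr (s - uu s) * \<bar>det Q\<bar> powr (s - uu s)"
    by (simp add: det_mul abs_mult powr_mult)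
  have "svf s (P ** Q) = sv1 (P ** Q) powr (2 * uu s - s) * \<bar>det (P ** Q)\<bar> powr (s - uu s)"
    by (rule svf_alt2[OF dPQ assms(3)])
  also have "... \<le> (sv1 P powr (2 * uu s - s) * sv1 Q powr (2 * uu s - s)) * (\<bar>det P\<bar> powr (s - uu s) * \<bar>det Q\<bar> powr (s - uu s))"
    unfolding d by (rule mult_right_mono[OF h]) simp
  also have "... = svf s P * svf s Q"
    using svf_alt2[OF assms(1,3)] svf_alt2[OF assms(2,3)] by (simp add: algebra_simps)
  finally show ?thesis .
qed

lemma svf_shift: assumes "det P \<noteq> 0" "s \<ge> 0" "t \<ge> 0"
  shows "svf s P * sv2 P powr t \<le> svf (s+t) P" "svf (s+t) P \<le> svf s P * sv1 P powr t"
proof -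
  have p1: "sv1 P > 0" and p2: "sv2 P > 0" using sv_pos[OF assms(1)] by auto
  have le: "sv2 P \<le> sv1 P" by (rule sv2_le_sv1)
  define d where "d = uu (s+t) - uu s"
  have d0: "0 \<le> d" "d \<le> t" using uu_shift[OF assms(2,3)] by (auto simp: d_def)
  have st: "s + t \<ge> 0" using assms by simp
  have eq: "svf (s+t) P = svf s P * (sv1 P powr d * sv2 P powr (t - d))"
    using p1 p2 unfolding svf_alt[OF assms(1,2)] svf_alt[OF assms(1) st] d_def
    by (simp add: powr_add[symmetric] algebra_simps)
  have "sv2 P powr t = sv2 P powr d * sv2 P powr (t - d)" using p2 by (simp add: powr_add[symmetric])
  also have "... \<le> sv1 P powr d * sv2 P powr (t - d)"
    by (rule mult_right_mono[OF powr_mono2[OF d0(1) _ le]]) (use p2 in auto)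
  finally have a: "sv2 P powr t \<le> sv1 P powr d * sv2 P powr (t - d)" .
  have "sv1 P powr d * sv2 P powr (t - d) \<le> sv1 P powr d * sv1 P powr (t - d)"
    by (rule mult_left_mono[OF powr_mono2]) (use d0 p2 le in auto)
  also have "... = sv1 P powr t" using p1 by (simp add: powr_add[symmetric])
  finally have b: "sv1 P powr d * sv2 P powr (t - d) \<le> sv1 P powr t" .
  have sp: "svf s P > 0" by (rule svf_pos[OF assms(1)])
  show "svf s P * sv2 P powr t \<le> svf (s+t) P" unfolding eq using a sp by simp
  show "svf (s+t) P \<le> svf s P * sv1 P powr t" unfolding eq using b sp by simp
qed


lemma seq_mult_bounds:
  fixes a :: "nat \<Rightarrow> real"
  assumes a0: "a 0 = 0" and sub: "\<And>n m. a (n+m) \<le> a n + a m"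
    and sup: "\<And>n m. a n + a m - d \<le> a (n+m)"
  shows "a (m*n) \<le> real m * a n" "real m * a n - real m * d \<le> a (m*n)"
proof -
  show "a (m*n) \<le> real m * a n"
  proof (induction m)
    case 0 thus ?case using a0 by simp
  next
    case (Suc m)
    have "a (Suc m * n) = a (n + m*n)" by simp
    also have "... \<le> a n + a (m*n)" by (rule sub)
    finally show ?case using Suc by (simp add: algebra_simps)
  qed
  show "real m * a n - real m * d \<le> a (m*n)"
  proof (induction m)
    case 0 thus ?case using a0 by simp
  next
    case (Suc m)
    have "a n + a (m*n) - d \<le> a (n + m*n)" by (rule sup)
    thus ?case using Suc by (simp add: algebra_simps)
  qed
qed

lemma seq_conv_bounds:
  fixes a :: "nat \<Rightarrow> real"
  assumes a0: "a 0 = 0" and sub: "\<And>n m. a (n+m) \<le> a n + a m"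
    and sup: "\<And>n m. a n + a m - d \<le> a (n+m)"
  shows "\<exists>L. (\<lambda>n. a n / real n) \<longlonglongrightarrow> L \<and> (\<forall>n\<ge>1. L \<le> a n / real n \<and> a n / real n \<le> L + d / real n)"
proof -
  define b where "b n = a n / real n" for n
  have key: "b n \<le> b m + d / real n" if "n \<ge> 1" "m \<ge> 1" for n m
  proof -
    have n0: "real n > 0" and m0: "real m > 0" using that by auto
    have h1: "a (m*n) \<le> real m * a n" and h2: "real m * a n - real m * d \<le> a (m*n)"
      using seq_mult_bounds[OF a0 sub sup] by blast+
    have h3: "a (n*m) \<le> real n * a m"
      using seq_mult_bounds[OF a0 sub sup] by blast
    have "real m * a n - real m * d \<le> real n * a m" using h2 h3 by (simp add: mult.commute)
    hence "(real m * a n - real m * d) / (real m * real n) \<le> real n * a m / (real m * real n)"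
      by (rule divide_right_mono) (use n0 m0 in auto)
    moreover have "(real m * a n - real m * d) / (real m * real n) = a n / real n - d / real n"
      using n0 m0 by (simp add: field_simps)
    moreover have "real n * a m / (real m * real n) = a m / real m"
      using n0 m0 by (simp add: field_simps)
    ultimately show ?thesis by (simp add: b_def)
  qed
  have sub_le: "b m \<le> b n + d / real m" if "n \<ge> 1" "m \<ge> 1" for n m using key[OF that(2,1)] .
  have d0: "d \<ge> 0" using sup[of 0 0] a0 by simp
  have "Cauchy b"
  proof (rule CauchyI)
    fix e :: real assume e: "0 < e"
    obtain M :: nat where M: "real M > 2 * d / e" using reals_Archimedean2 by blast
    show "\<exists>M. \<forall>m\<ge>M. \<forall>n\<ge>M. norm (b m - b n) < e"
    proof (intro exI[of _ "Suc M"] allI impI)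
      fix m n assume mn: "m \<ge> Suc M" "n \<ge> Suc M"
      have dm: "d / real m < e" and dn: "d / real n < e"
      proof -
        have "2 * d / e < real m" "2 * d / e < real n" using M mn by auto
        hence "2 * d < e * real m" "2 * d < e * real n" using e by (auto simp: field_simps)
        thus "d / real m < e" "d / real n < e" using mn d0 e by (auto simp: field_simps)
      qed
      have "b m - b n \<le> d / real m" "b n - b m \<le> d / real n"
        using key[of m n] key[of n m] mn by auto
      thus "norm (b m - b n) < e" using dm dn by auto
    qed
  qed
  then obtain L where L: "b \<longlonglongrightarrow> L" using Cauchy_convergent_iff convergent_def by blast
  have bounds: "L \<le> b n \<and> b n \<le> L + d / real n" if n: "n \<ge> 1" for n
  proof
    have "(\<lambda>m. b n + d / real m) \<longlonglongrightarrow> b n + 0" by (intro tendsto_intros)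
    hence lim2: "(\<lambda>m. b n + d / real m) \<longlonglongrightarrow> b n" by simp
    show "L \<le> b n"
      by (rule LIMSEQ_le[OF L lim2]) (use sub_le n in auto)
    show "b n \<le> L + d / real n"
    proof -
      have "b n - d / real n \<le> L"
      proof (rule LIMSEQ_le[OF tendsto_const L])
        show "\<exists>N. \<forall>m\<ge>N. b n - d / real n \<le> b m"
          using key[of n] n by (intro exI[of _ 1]) (auto simp: algebra_simps)
      qed
      thus ?thesis by simp
    qed
  qed
  show ?thesis using L bounds unfolding b_def by blast
qed


lemma le_plus_over_n:
  fixes x y d :: real
  assumes "\<And>n::nat. n \<ge> 1 \<Longrightarrow> x \<le> y + d / real n"
  shows "x \<le> y"
proof (rule ccontr)
  assume "\<not> x \<le> y"
  hence e: "x - y > 0" by simp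
  obtain n :: nat where n: "real n > d / (x - y)" using reals_Archimedean2 by blast
  define m where "m = max n 1"
  have m1: "m \<ge> 1" and mn: "real m \<ge> real n" by (auto simp: m_def)
  have "d / (x - y) < real m" using n mn by linarith
  hence "d < (x - y) * real m" using e by (simp add: field_simps)
  hence "d / real m < x - y" using m1 by (simp add: field_simps)
  thus False using assms[OF m1] by linarith
qed

locale ifs2 =
  fixes N :: nat and A :: "nat \<Rightarrow> mat2"
  assumes N2: "N \<ge> 2" and detA: "\<And>i. i < N \<Longrightarrow> det (A i) \<noteq> 0"
    and normA: "\<And>i. i < N \<Longrightarrow> sv1 (A i) < 1"
begin

abbreviation "mp w \<equiv> matprod A w"

definition gam where "gam = Max ((\<lambda>i. sv1 (A i)) ` {..<N})"
definition dm where "dm = Min ((\<lambda>i. \<bar>det (A i)\<bar>) ` {..<N})"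

lemma N0: "{..<N} \<noteq> {}"
proof -
  have "0 \<in> {..<N}" using N2 by simp
  thus ?thesis by blast
qed

lemma gam_props: "0 < gam" "gam < 1" "\<And>i. i < N \<Longrightarrow> sv1 (A i) \<le> gam"
proof -
  have "sv1 (A 0) \<le> gam" unfolding gam_def using N2 by (intro Max_ge) auto
  thus "0 < gam" using sv_pos(1)[OF detA[of 0]] N2 by linarith
  have "gam \<in> (\<lambda>i. sv1 (A i)) ` {..<N}" unfolding gam_def using N0 by (intro Max_in) auto
  thus "gam < 1" using normA by auto
  show "\<And>i. i < N \<Longrightarrow> sv1 (A i) \<le> gam" unfolding gam_def by (intro Max_ge) auto
qed

lemma dm_props: "0 < dm" "\<And>i. i < N \<Longrightarrow> dm \<le> \<bar>det (A i)\<bar>"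
proof -
  have "dm \<in> (\<lambda>i. \<bar>det (A i)\<bar>) ` {..<N}" unfolding dm_def using N0 by (intro Min_in) auto
  thus "0 < dm" using detA by auto
  show "\<And>i. i < N \<Longrightarrow> dm \<le> \<bar>det (A i)\<bar>" unfolding dm_def by (intro Min_le) auto
qed

lemma mp_det: "w \<in> all_words N \<Longrightarrow> det (mp w) \<noteq> 0 \<and> dm ^ length w \<le> \<bar>det (mp w)\<bar>"
proof (induction w)
  case Nil thus ?case by simp
next
  case (Cons i w)
  hence i: "i < N" and w: "w \<in> all_words N" by (auto simp: all_words_def)
  have "dm * dm ^ length w \<le> \<bar>det (A i)\<bar> * \<bar>det (mp w)\<bar>"
    using Cons.IH[OF w] dm_props i by (intro mult_mono) auto
  thus ?case using Cons.IH[OF w] detA[OF i] by (simp add: det_mul abs_mult)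
qed

lemma mp_sv1: "w \<in> all_words N \<Longrightarrow> sv1 (mp w) \<le> gam ^ length w"
proof (induction w)
  case Nil thus ?case by (simp add: sv1_id)
next
  case (Cons i w)
  hence i: "i < N" and w: "w \<in> all_words N" by (auto simp: all_words_def)
  have "sv1 (mp (i#w)) \<le> sv1 (A i) * sv1 (mp w)" by (simp add: sv1_submult)
  also have "... \<le> gam * gam ^ length w"
    using Cons.IH[OF w] gam_props i by (intro mult_mono) (auto simp: sv1_nonneg)
  finally show ?case by simp
qed

lemma mp_sv2: assumes "w \<in> all_words N" shows "dm ^ length w \<le> sv2 (mp w)"
proof -
  have d: "det (mp w) \<noteq> 0" and dd: "dm ^ length w \<le> \<bar>det (mp w)\<bar>" using mp_det[OF assms] by auto
  have s1: "sv1 (mp w) \<le> 1" using mp_sv1[OF assms] gam_props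
    by (meson less_eq_real_def order_trans power_le_one)
  have p: "sv1 (mp w) > 0" using sv_pos[OF d] by simp
  have "\<bar>det (mp w)\<bar> \<le> \<bar>det (mp w)\<bar> / sv1 (mp w)"
    using s1 p by (simp add: le_divide_eq mult_left_le)
  thus ?thesis using dd sv2_det[OF d] by simp
qed

definition Z :: "real \<Rightarrow> nat \<Rightarrow> real" where
  "Z s n = (\<Sum>w\<in>words N n. svf s (mp w))"

lemma words_ne: "words N n \<noteq> {}"
proof -
  have "replicate n 0 \<in> words N n" using N2 by (auto simp: words_def)
  thus ?thesis by auto
qed

lemma Z_pos: "Z s n > 0"
  unfolding Z_def using words_ne
  by (intro sum_pos) (auto intro!: svf_pos dest!: words_in_all mp_det)

lemma Z_zero: "Z s 0 = 1"
  by (simp add: Z_def words_0 svf_def sv1_id sv2_det[of "mat 1"])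

lemma Z_sub: assumes "s \<ge> 0" shows "Z s (n+m) \<le> Z s n * Z s m"
proof -
  have "Z s (n+m) = (\<Sum>x\<in>words N n. \<Sum>y\<in>words N m. svf s (mp x ** mp y))"
    unfolding Z_def sum_words_append matprod_append ..
  also have "... \<le> (\<Sum>x\<in>words N n. \<Sum>y\<in>words N m. svf s (mp x) * svf s (mp y))"
    by (intro sum_mono svf_submult assms) (auto dest!: words_in_all mp_det)
  also have "... = Z s n * Z s m" by (simp add: Z_def sum_product)
  finally show ?thesis .
qed

lemma Z_0: "Z 0 n = real N ^ n"
proof -
  have "Z 0 n = (\<Sum>w\<in>words N n. 1)"
    unfolding Z_def by (intro sum.cong refl svf_0) (auto dest!: words_in_all mp_det)
  thus ?thesis by (simp add: words_card)
qed

lemma powr_pow_swap: fixes x t :: real assumes "0 < x" shows "(x ^ n) powr t = (x powr t) ^ n"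
proof -
  have "(x ^ n) powr t = (x powr real n) powr t" using powr_realpow[OF assms, of n] by simp
  also have "... = x powr (real n * t)" by (simp add: powr_powr)
  also have "... = (x powr t) ^ n" using powr_power[of x t n] assms by simp
  finally show ?thesis .
qed

lemma Z_shift: assumes "s \<ge> 0" "t \<ge> 0"
  shows "Z (s+t) n \<le> Z s n * (gam powr t) ^ n" "Z s n * (dm powr t) ^ n \<le> Z (s+t) n"
proof -
  have "Z (s+t) n \<le> (\<Sum>w\<in>words N n. svf s (mp w) * (gam powr t) ^ n)"
    unfolding Z_def
  proof (rule sum_mono)
    fix w assume w: "w \<in> words N n"
    hence aw: "w \<in> all_words N" and lw: "length w = n" by (auto simp: words_def all_words_def)
    have d: "det (mp w) \<noteq> 0" using mp_det[OF aw] by simp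
    have "svf (s+t) (mp w) \<le> svf s (mp w) * sv1 (mp w) powr t" by (rule svf_shift(2)[OF d assms])
    also have "... \<le> svf s (mp w) * (gam ^ n) powr t"
      using mp_sv1[OF aw] lw sv_pos[OF d] svf_pos[OF d, of s] assms
      by (intro mult_left_mono powr_mono2) auto
    finally show "svf (s+t) (mp w) \<le> svf s (mp w) * (gam powr t) ^ n"
      using gam_props by (simp add: powr_pow_swap)
  qed
  thus "Z (s+t) n \<le> Z s n * (gam powr t) ^ n" by (simp add: Z_def sum_distrib_right)
  have "(\<Sum>w\<in>words N n. svf s (mp w) * (dm powr t) ^ n) \<le> Z (s+t) n"
    unfolding Z_def
  proof (rule sum_mono)
    fix w assume w: "w \<in> words N n"
    hence aw: "w \<in> all_words N" and lw: "length w = n" by (auto simp: words_def all_words_def)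
    have d: "det (mp w) \<noteq> 0" using mp_det[OF aw] by simp
    have "svf s (mp w) * (dm ^ n) powr t \<le> svf s (mp w) * sv2 (mp w) powr t"
      using mp_sv2[OF aw] lw dm_props svf_pos[OF d, of s] assms
      by (intro mult_left_mono powr_mono2) auto
    also have "... \<le> svf (s+t) (mp w)" by (rule svf_shift(1)[OF d assms])
    finally show "svf s (mp w) * (dm powr t) ^ n \<le> svf (s+t) (mp w)"
      using dm_props by (simp add: powr_pow_swap)
  qed
  thus "Z s n * (dm powr t) ^ n \<le> Z (s+t) n" by (simp add: Z_def sum_distrib_right)
qed

end


locale ifs3 = ifs2 +
  assumes supmult: "\<And>s. s \<ge> 0 \<Longrightarrow> \<exists>D\<ge>1. \<forall>n m. Z s n * Z s m \<le> D * Z s (n+m)"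
begin

abbreviation "P s \<equiv> pressure N A s"

lemma press_bounds: assumes s: "s \<ge> 0"
  shows "\<exists>d\<ge>0. \<forall>n\<ge>1. P s \<le> ln (Z s n) / real n \<and> ln (Z s n) / real n \<le> P s + d / real n"
proof -
  obtain D where D: "D \<ge> 1" "\<And>n m. Z s n * Z s m \<le> D * Z s (n+m)" using supmult[OF s] by blast
  define a where "a n = ln (Z s n)" for n
  have a0: "a 0 = 0" by (simp add: a_def Z_zero)
  have sub: "a (n+m) \<le> a n + a m" for n m
  proof -
    have "ln (Z s (n+m)) \<le> ln (Z s n * Z s m)"
      using Z_sub[OF s] Z_pos by (subst ln_le_cancel_iff) (auto intro: mult_pos_pos)
    thus ?thesis using Z_pos[of s n] Z_pos[of s m] by (simp add: a_def ln_mult)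
  qed
  have sup: "a n + a m - ln D \<le> a (n+m)" for n m
  proof -
    have "ln (Z s n * Z s m) \<le> ln (D * Z s (n+m))"
      using D Z_pos by (subst ln_le_cancel_iff) (auto intro: mult_pos_pos)
    thus ?thesis using Z_pos[of s n] Z_pos[of s m] Z_pos[of s "n+m"] D by (simp add: a_def ln_mult)
  qed
  obtain L where L: "(\<lambda>n. a n / real n) \<longlonglongrightarrow> L"
    and B: "\<forall>n\<ge>1. L \<le> a n / real n \<and> a n / real n \<le> L + ln D / real n"
    using seq_conv_bounds[OF a0 sub sup] by blast
  have "P s = lim (\<lambda>n. a n / real n)" by (simp add: pressure_def a_def Z_def)
  also have "... = L" using L by (rule limI)
  finally have "P s = L" .
  thus ?thesis using B D by (intro exI[of _ "ln D"]) (auto simp: a_def)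
qed

lemma P_shift: assumes s: "s \<ge> 0" and t: "t \<ge> 0"
  shows "P (s+t) \<le> P s + t * ln gam" "P s + t * ln dm \<le> P (s+t)"
proof -
  obtain d1 where d1: "d1 \<ge> 0" "\<forall>n\<ge>1. P s \<le> ln (Z s n) / real n \<and> ln (Z s n) / real n \<le> P s + d1 / real n"
    using press_bounds[OF s] by blast
  have st: "s + t \<ge> 0" using s t by simp
  obtain d2 where d2: "d2 \<ge> 0" "\<forall>n\<ge>1. P (s+t) \<le> ln (Z (s+t) n) / real n \<and> ln (Z (s+t) n) / real n \<le> P (s+t) + d2 / real n"
    using press_bounds[OF st] by blast
  have g: "gam > 0" and dd: "dm > 0" using gam_props dm_props by auto
  have up: "ln (Z (s+t) n) / real n \<le> ln (Z s n) / real n + t * ln gam" if n: "n \<ge> 1" for n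
  proof -
    have "ln (Z (s+t) n) \<le> ln (Z s n * (gam powr t) ^ n)"
      using Z_shift(1)[OF s t, of n] Z_pos g by (subst ln_le_cancel_iff) auto
    also have "... = ln (Z s n) + real n * (t * ln gam)"
      using Z_pos[of s n] g by (simp add: ln_mult ln_realpow ln_powr)
    finally have "ln (Z (s+t) n) / real n \<le> (ln (Z s n) + real n * (t * ln gam)) / real n"
      by (rule divide_right_mono) simp
    also have "... = ln (Z s n) / real n + t * ln gam" using n by (simp add: field_simps)
    finally show ?thesis .
  qed
  have lo: "ln (Z s n) / real n + t * ln dm \<le> ln (Z (s+t) n) / real n" if n: "n \<ge> 1" for n
  proof -
    have "ln (Z s n) + real n * (t * ln dm) = ln (Z s n * (dm powr t) ^ n)"
      using Z_pos[of s n] dd by (simp add: ln_mult ln_realpow ln_powr)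
    also have "... \<le> ln (Z (s+t) n)"
      using Z_shift(2)[OF s t, of n] Z_pos dd by (subst ln_le_cancel_iff) auto
    finally have "(ln (Z s n) + real n * (t * ln dm)) / real n \<le> ln (Z (s+t) n) / real n"
      by (rule divide_right_mono) simp
    moreover have "(ln (Z s n) + real n * (t * ln dm)) / real n = ln (Z s n) / real n + t * ln dm"
      using n by (simp add: field_simps)
    ultimately show ?thesis by simp
  qed
  show "P (s+t) \<le> P s + t * ln gam"
  proof (rule le_plus_over_n[of _ _ d1])
    fix n :: nat assume n: "n \<ge> 1"
    have "P (s+t) \<le> ln (Z (s+t) n) / real n" using d2(2) n by blast
    moreover have "ln (Z s n) / real n \<le> P s + d1 / real n" using d1(2) n by blast
    ultimately show "P (s+t) \<le> P s + t * ln gam + d1 / real n" using up[OF n] by linarith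
  qed
  show "P s + t * ln dm \<le> P (s+t)"
  proof (rule le_plus_over_n[of _ _ d2])
    fix n :: nat assume n: "n \<ge> 1"
    have "ln (Z (s+t) n) / real n \<le> P (s+t) + d2 / real n" using d2(2) n by blast
    moreover have "P s \<le> ln (Z s n) / real n" using d1(2) n by blast
    ultimately show "P s + t * ln dm \<le> P (s+t) + d2 / real n" using lo[OF n] by linarith
  qed
qed

lemma P_0: "P 0 = ln (real N)"
proof -
  obtain d where d: "d \<ge> 0" "\<forall>n\<ge>1. P 0 \<le> ln (Z 0 n) / real n \<and> ln (Z 0 n) / real n \<le> P 0 + d / real n"
    using press_bounds[of 0] by auto
  have e: "ln (Z 0 n) / real n = ln (real N)" if "n \<ge> 1" for n
    using that N2 by (simp add: Z_0 ln_realpow)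
  have "P 0 \<le> ln (real N)" using d(2) e[of 1] by auto
  moreover have "ln (real N) \<le> P 0" by (rule le_plus_over_n[of _ _ d]) (use d(2) e in auto)
  ultimately show ?thesis by simp
qed

lemma P_zero_unique: "\<exists>s0\<ge>0. P s0 = 0 \<and> affinity_dim N A = s0"
proof -
  have g: "0 < gam" "gam < 1" using gam_props by auto
  hence lg: "ln gam < 0" by simp
  define S where "S = ln (real N) / (- ln gam)"
  have lnN: "ln (real N) > 0" using N2 by simp
  have S0: "S \<ge> 0" using divide_nonneg_pos[of "ln (real N)" "- ln gam"] lnN lg unfolding S_def by simp
  have PS: "P S \<le> 0"
  proof -
    have "P (0 + S) \<le> P 0 + S * ln gam" by (rule P_shift(1)) (use S0 in auto)
    also have "... = 0" using lg by (simp add: P_0 S_def)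
    finally show ?thesis by simp
  qed
  have cont: "continuous_on {0..S} P"
  proof (rule lipschitz_on_continuous_on)
    show "\<bar>ln dm\<bar>-lipschitz_on {0..S} P"
    proof (rule lipschitz_onI)
      fix x y assume x: "x \<in> {0..S}" and y: "y \<in> {0..S}"
      have *: "\<bar>P x - P y\<bar> \<le> \<bar>ln dm\<bar> * \<bar>x - y\<bar>" if xy: "x \<le> y" "x \<ge> 0" for x y
      proof -
        have a: "P (x + (y - x)) \<le> P x + (y - x) * ln gam" by (rule P_shift(1)) (use xy in auto)
        have b: "P x + (y - x) * ln dm \<le> P (x + (y - x))" by (rule P_shift(2)) (use xy in auto)
        have c: "(y - x) * ln gam \<le> 0" using xy lg by (simp add: mult_nonneg_nonpos)
        have "\<bar>x - y\<bar> = y - x" using xy by simp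
        have "(y - x) * (- ln dm) \<le> (y - x) * \<bar>ln dm\<bar>" by (rule mult_left_mono) (use xy in auto)
        hence "- ((y - x) * ln dm) \<le> \<bar>ln dm\<bar> * \<bar>x - y\<bar>" using \<open>\<bar>x - y\<bar> = y - x\<close>
          by (simp add: mult.commute)
        have "P x - P y \<le> \<bar>ln dm\<bar> * \<bar>x - y\<bar>" using a b c \<open>- ((y - x) * ln dm) \<le> _\<close> by simp
        moreover have "P y - P x \<le> 0" using a c by simp
        moreover have "0 \<le> \<bar>ln dm\<bar> * \<bar>x - y\<bar>" by simp
        ultimately show ?thesis by linarith
      qed
      have **: "\<bar>P x - P y\<bar> \<le> \<bar>ln dm\<bar> * \<bar>x - y\<bar>"
      proof (cases "x \<le> y")
        case True thus ?thesis using *[of x y] x by simp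
      next
        case False
        hence "\<bar>P y - P x\<bar> \<le> \<bar>ln dm\<bar> * \<bar>y - x\<bar>" using *[of y x] y by simp
        moreover have "\<bar>P x - P y\<bar> = \<bar>P y - P x\<bar>" by (rule abs_minus_commute)
        moreover have "\<bar>x - y\<bar> = \<bar>y - x\<bar>" by (rule abs_minus_commute)
        ultimately show ?thesis by simp
      qed
      show "dist (P x) (P y) \<le> \<bar>ln dm\<bar> * dist x y" using ** by (simp only: dist_real_def)
    qed simp
  qed
  obtain s0 where s0: "0 \<le> s0" "s0 \<le> S" "P s0 = 0"
    using IVT2'[of P S 0 0, OF PS _ S0 cont] lnN by (auto simp: P_0)
  have uniq: "s = s0" if "s \<ge> 0" "P s = 0" for s
  proof (rule ccontr)
    assume ne: "s \<noteq> s0"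
    have strict: "P b < P a" if ab: "0 \<le> a" "a < b" for a b
    proof -
      have "P (a + (b - a)) \<le> P a + (b - a) * ln gam" by (rule P_shift(1)) (use ab in auto)
      moreover have "(b - a) * ln gam < 0" using ab lg by (simp add: mult_pos_neg)
      ultimately show ?thesis by simp
    qed
    show False
    proof (cases "s < s0")
      case True thus False using strict[of s s0] \<open>s \<ge> 0\<close> \<open>P s = 0\<close> s0 by simp
    next
      case False hence "s0 < s" using ne by simp
      thus False using strict[of s0 s] \<open>s \<ge> 0\<close> \<open>P s = 0\<close> s0 by simp
    qed
  qed
  have "affinity_dim N A = s0"
    unfolding affinity_dim_def
  proof (rule the_equality)
    show "0 \<le> s0 \<and> P s0 = 0" using s0 by simp
    fix s assume "0 \<le> s \<and> P s = 0"
    thus "s = s0" using uniq by blast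
  qed
  thus ?thesis using s0 by blast
qed

lemma Z_bounded_dim: "affinity_dim N A \<ge> 0 \<and> (\<exists>C. \<forall>n. Z (affinity_dim N A) n \<le> C)"
proof -
  obtain s0 where s0: "s0 \<ge> 0" "P s0 = 0" "affinity_dim N A = s0" using P_zero_unique by blast
  obtain d where d: "d \<ge> 0" "\<forall>n\<ge>1. P s0 \<le> ln (Z s0 n) / real n \<and> ln (Z s0 n) / real n \<le> P s0 + d / real n"
    using press_bounds[OF s0(1)] by blast
  have "Z s0 n \<le> exp d" for n
  proof (cases "n = 0")
    case True thus ?thesis using d by (simp add: Z_zero)
  next
    case False
    hence "ln (Z s0 n) / real n \<le> d / real n" using d s0 by auto
    hence "ln (Z s0 n) \<le> d" using False by (simp add: divide_le_cancel)
    thus ?thesis using Z_pos by (metis exp_le_cancel_iff exp_ln)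
  qed
  thus ?thesis using s0 by auto
qed

end


context ifs2 begin

lemma dm_le1: "dm \<le> 1"
proof -
  have "dm \<le> \<bar>det (A 0)\<bar>" using dm_props N2 by auto
  also have "... = sv1 (A 0) * sv2 (A 0)" using sv_prod by simp
  also have "... \<le> sv1 (A 0) * sv1 (A 0)" by (rule mult_left_mono[OF sv2_le_sv1 sv1_nonneg])
  also have "... \<le> 1 * 1" using normA[of 0] N2 sv1_nonneg[of "A 0"] by (intro mult_mono) auto
  finally show ?thesis by simp
qed

definition QM :: bool where
  "QM \<longleftrightarrow> (\<exists>k c. c > 0 \<and> (\<forall>w\<in>all_words N. \<forall>v\<in>all_words N. \<exists>l\<in>all_words N.
      length l \<le> k \<and> c * sv1 (mp w) * sv1 (mp v) \<le> sv1 (mp (w @ l @ v))))"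

lemma svf_qm:
  assumes s: "s \<ge> 0" and c: "c > 0"
    and w: "w \<in> all_words N" and v: "v \<in> all_words N" and l: "l \<in> all_words N" "length l \<le> k"
    and q: "c * sv1 (mp w) * sv1 (mp v) \<le> sv1 (mp (w @ l @ v))"
  shows "c powr (2 * uu s - s) * (dm ^ k) powr (s - uu s) * (svf s (mp w) * svf s (mp v)) \<le> svf s (mp (w @ l @ v))"
proof -
  define a where "a = 2 * uu s - s"
  define b where "b = s - uu s"
  have a0: "a \<ge> 0" and b0: "b \<ge> 0" using uu_props[OF s] by (auto simp: a_def b_def)
  have wlv: "w @ l @ v \<in> all_words N" using w l v by (auto simp: all_words_def)
  have dw: "det (mp w) \<noteq> 0" and dv: "det (mp v) \<noteq> 0" and dl: "det (mp l) \<noteq> 0"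
    and dwlv: "det (mp (w @ l @ v)) \<noteq> 0"
    using mp_det w v l(1) wlv by auto
  have "(c * sv1 (mp w) * sv1 (mp v)) powr a \<le> sv1 (mp (w @ l @ v)) powr a"
    by (rule powr_mono2[OF a0 _ q]) (use c sv1_nonneg in auto)
  hence h1: "c powr a * sv1 (mp w) powr a * sv1 (mp v) powr a \<le> sv1 (mp (w @ l @ v)) powr a"
    using c sv1_nonneg by (simp add: powr_mult)
  have "dm ^ k \<le> dm ^ length l" using dm_props dm_le1 l(2) by (simp add: power_decreasing)
  also have "... \<le> \<bar>det (mp l)\<bar>" using mp_det[OF l(1)] by simp
  finally have dlk: "dm ^ k \<le> \<bar>det (mp l)\<bar>" .
  have "(dm ^ k) powr b \<le> \<bar>det (mp l)\<bar> powr b"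
    by (rule powr_mono2[OF b0 _ dlk]) (use dm_props in simp)
  hence "\<bar>det (mp w)\<bar> powr b * (dm ^ k) powr b * \<bar>det (mp v)\<bar> powr b
     \<le> \<bar>det (mp w)\<bar> powr b * \<bar>det (mp l)\<bar> powr b * \<bar>det (mp v)\<bar> powr b"
    by (intro mult_right_mono mult_left_mono) auto
  also have "... = \<bar>det (mp (w @ l @ v))\<bar> powr b"
    by (simp add: matprod_append det_mul abs_mult powr_mult)
  finally have h2: "\<bar>det (mp w)\<bar> powr b * (dm ^ k) powr b * \<bar>det (mp v)\<bar> powr b \<le> \<bar>det (mp (w @ l @ v))\<bar> powr b" .
  have "c powr a * (dm ^ k) powr b * (svf s (mp w) * svf s (mp v))
     = (c powr a * sv1 (mp w) powr a * sv1 (mp v) powr a) * (\<bar>det (mp w)\<bar> powr b * (dm ^ k) powr b * \<bar>det (mp v)\<bar> powr b)"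
    unfolding svf_alt2[OF dw s] svf_alt2[OF dv s] a_def b_def by (simp add: algebra_simps)
  also have "... \<le> sv1 (mp (w @ l @ v)) powr a * \<bar>det (mp (w @ l @ v))\<bar> powr b"
    by (rule mult_mono[OF h1 h2]) auto
  also have "... = svf s (mp (w @ l @ v))" unfolding svf_alt2[OF dwlv s] a_def b_def ..
  finally show ?thesis by (simp add: a_def b_def)
qed

lemma sum_inj_le:
  fixes f :: "'b \<Rightarrow> real"
  assumes "inj_on g S" "g ` S \<subseteq> T" "finite T" "\<And>y. y \<in> T \<Longrightarrow> f y \<ge> 0"
  shows "(\<Sum>p\<in>S. f (g p)) \<le> (\<Sum>y\<in>T. f y)"
proof -
  have "(\<Sum>p\<in>S. f (g p)) = (\<Sum>y\<in>g ` S. f y)" using sum.reindex[OF assms(1), of f] by simp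
  also have "... \<le> (\<Sum>y\<in>T. f y)" by (rule sum_mono2[OF assms(3,2)]) (use assms(4) in auto)
  finally show ?thesis .
qed

lemma QM_supmult: assumes qm: QM and s: "s \<ge> 0"
  shows "\<exists>D\<ge>1. \<forall>n m. Z s n * Z s m \<le> D * Z s (n+m)"
proof -
  obtain k c where c: "c > 0" and q: "\<forall>w\<in>all_words N. \<forall>v\<in>all_words N. \<exists>l\<in>all_words N.
      length l \<le> k \<and> c * sv1 (mp w) * sv1 (mp v) \<le> sv1 (mp (w @ l @ v))"
    using qm unfolding QM_def by blast
  obtain L where L: "\<And>w v. w\<in>all_words N \<Longrightarrow> v\<in>all_words N \<Longrightarrow> L w v \<in> all_words N \<and>
      length (L w v) \<le> k \<and> c * sv1 (mp w) * sv1 (mp v) \<le> sv1 (mp (w @ L w v @ v))"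
    using q by metis
  define c' where "c' = c powr (2 * uu s - s) * (dm ^ k) powr (s - uu s)"
  have c'0: "c' > 0" using c dm_props by (simp add: c'_def)
  define D where "D = max 1 ((\<Sum>j\<le>k. Z s j) / c')"
  have phi_nn: "svf s (mp x) \<ge> 0" if "x \<in> all_words N" for x
    using svf_pos[of "mp x" s] mp_det[OF that] by simp
  have "Z s n * Z s m \<le> D * Z s (n+m)" for n m
  proof -
    define S where "S = words N n \<times> words N m"
    define g where "g = (\<lambda>(w,v). (length (L w v), w @ L w v @ v))"
    define T where "T = Sigma {..k} (\<lambda>j. words N (n + j + m))"
    have inj: "inj_on g S"
    proof (rule inj_onI)
      fix p1 p2 assume p1: "p1 \<in> S" and p2: "p2 \<in> S" and e: "g p1 = g p2"
      obtain w1 v1 w2 v2 where pp: "p1 = (w1, v1)" "p2 = (w2, v2)" by (cases p1, cases p2) auto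
      have lw: "length w1 = n" "length w2 = n" "length v1 = m" "length v2 = m"
        using p1 p2 pp by (auto simp: S_def words_def)
      have e1: "length (L w1 v1) = length (L w2 v2)" and e2: "w1 @ L w1 v1 @ v1 = w2 @ L w2 v2 @ v2"
        using e pp by (auto simp: g_def)
      have "w1 = w2" using e2 lw by (metis append_eq_append_conv)
      moreover have "v1 = v2" using e2 lw e1
        by (metis append_eq_append_conv length_append)
      ultimately show "p1 = p2" using pp by simp
    qed
    have img: "g ` S \<subseteq> T"
    proof
      fix y assume "y \<in> g ` S"
      then obtain w v where wv: "w \<in> words N n" "v \<in> words N m" "y = g (w, v)" by (auto simp: S_def)
      have "L w v \<in> all_words N" "length (L w v) \<le> k" using L wv(1,2) words_in_all by blast+
      thus "y \<in> T" using wv by (auto simp: g_def T_def words_def all_words_def)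
    qed
    have finT: "finite T" by (simp add: T_def)
    have "c' * (Z s n * Z s m) = c' * (\<Sum>w\<in>words N n. \<Sum>v\<in>words N m. svf s (mp w) * svf s (mp v))"
      by (simp only: Z_def sum_product)
    also have "... = (\<Sum>w\<in>words N n. \<Sum>v\<in>words N m. c' * (svf s (mp w) * svf s (mp v)))"
      by (simp only: sum_distrib_left)
    also have "... \<le> (\<Sum>w\<in>words N n. \<Sum>v\<in>words N m. svf s (mp (w @ L w v @ v)))"
    proof (intro sum_mono)
      fix w v assume w: "w \<in> words N n" and v: "v \<in> words N m"
      have aw: "w \<in> all_words N" and av: "v \<in> all_words N" using w v words_in_all by auto
      show "c' * (svf s (mp w) * svf s (mp v)) \<le> svf s (mp (w @ L w v @ v))"
        unfolding c'_def by (rule svf_qm[OF s c aw av]) (use L[OF aw av] in auto)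
    qed
    also have "... = (\<Sum>p\<in>S. (\<lambda>(j,x). svf s (mp x)) (g p))"
      by (simp add: S_def g_def sum.cartesian_product split_def)
    also have "... \<le> (\<Sum>y\<in>T. (\<lambda>(j,x). svf s (mp x)) y)"
      by (rule sum_inj_le[OF inj img finT]) (auto simp: T_def intro!: phi_nn dest: words_in_all)
    also have "... = (\<Sum>j\<le>k. Z s (n + j + m))" by (simp add: T_def sum.Sigma[symmetric] Z_def)
    also have "... \<le> (\<Sum>j\<le>k. Z s (n + m) * Z s j)"
    proof (rule sum_mono)
      fix j show "Z s (n + j + m) \<le> Z s (n + m) * Z s j"
        using Z_sub[OF s, of "n+m" j] by (simp add: add.commute add.left_commute)
    qed
    also have "... = Z s (n+m) * (\<Sum>j\<le>k. Z s j)" by (simp add: sum_distrib_left)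
    finally have "Z s n * Z s m \<le> Z s (n+m) * (\<Sum>j\<le>k. Z s j) / c'" using c'0 by (simp add: field_simps)
    also have "... = ((\<Sum>j\<le>k. Z s j) / c') * Z s (n+m)" by simp
    also have "... \<le> D * Z s (n+m)"
      unfolding D_def using Z_pos[of s "n+m"] by (intro mult_right_mono) auto
    finally show ?thesis .
  qed
  moreover have "D \<ge> 1" by (simp add: D_def)
  ultimately show ?thesis by blast
qed

end


lemma inner_mv_bound: fixes M :: mat2 assumes "norm z = 1" "norm x = 1"
  shows "\<bar>z \<bullet> (M *v x)\<bar> \<le> sv1 M"
proof -
  have "\<bar>z \<bullet> (M *v x)\<bar> \<le> norm z * norm (M *v x)" by (rule Cauchy_Schwarz_ineq2)
  also have "... \<le> sv1 M * norm x" using assms sv1_bound[of M x] by simp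
  finally show ?thesis using assms by simp
qed

context ifs2 begin

lemma irr_unit:
  assumes irr: "irreducible_tuple N A"
  shows "\<exists>k c. c > 0 \<and> (\<forall>y z::real^2. norm y = 1 \<longrightarrow> norm z = 1 \<longrightarrow>
           (\<exists>l\<in>all_words N. length l \<le> k \<and> c \<le> \<bar>z \<bullet> (mp l *v y)\<bar>))"
proof (rule ccontr)
  assume H: "\<not> ?thesis"
  have "\<forall>k. \<exists>p::((real^2) \<times> (real^2)). norm (fst p) = 1 \<and> norm (snd p) = 1 \<and>
          (\<forall>l\<in>all_words N. length l \<le> k \<longrightarrow> \<bar>snd p \<bullet> (mp l *v fst p)\<bar> < 1 / (real k + 1))"
  proof
    fix k :: nat
    have "\<not> (\<forall>y z::real^2. norm y = 1 \<longrightarrow> norm z = 1 \<longrightarrow>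
           (\<exists>l\<in>all_words N. length l \<le> k \<and> 1 / (real k + 1) \<le> \<bar>z \<bullet> (mp l *v y)\<bar>))"
    proof
      assume "\<forall>y z::real^2. norm y = 1 \<longrightarrow> norm z = 1 \<longrightarrow>
           (\<exists>l\<in>all_words N. length l \<le> k \<and> 1 / (real k + 1) \<le> \<bar>z \<bullet> (mp l *v y)\<bar>)"
      moreover have "1 / (real k + 1) > 0" by simp
      ultimately show False using H by blast
    qed
    then obtain y z :: "real^2" where "norm y = 1" "norm z = 1"
      "\<forall>l\<in>all_words N. length l \<le> k \<longrightarrow> \<bar>z \<bullet> (mp l *v y)\<bar> < 1 / (real k + 1)"
      by (metis not_le)
    thus "\<exists>p::((real^2) \<times> (real^2)). norm (fst p) = 1 \<and> norm (snd p) = 1 \<and>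
          (\<forall>l\<in>all_words N. length l \<le> k \<longrightarrow> \<bar>snd p \<bullet> (mp l *v fst p)\<bar> < 1 / (real k + 1))"
      by (intro exI[of _ "(y,z)"]) simp
  qed
  then obtain F :: "nat \<Rightarrow> (real^2) \<times> (real^2)" where F: "\<And>k. norm (fst (F k)) = 1 \<and> norm (snd (F k)) = 1 \<and>
          (\<forall>l\<in>all_words N. length l \<le> k \<longrightarrow> \<bar>snd (F k) \<bullet> (mp l *v fst (F k))\<bar> < 1 / (real k + 1))"
    by metis
  define K where "K = sphere (0::real^2) 1 \<times> sphere (0::real^2) 1"
  have "compact K" unfolding K_def by (intro compact_Times compact_sphere)
  hence "seq_compact K" by (rule compact_imp_seq_compact)
  moreover have "\<forall>k. F k \<in> K" using F by (auto simp: K_def mem_Times_iff)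
  ultimately obtain p0 r where p0: "p0 \<in> K" and r: "strict_mono r" and lim: "(F \<circ> r) \<longlonglongrightarrow> p0"
    unfolding seq_compact_def by blast
  define y0 where "y0 = fst p0"
  define z0 where "z0 = snd p0"
  have ny0: "norm y0 = 1" and nz0: "norm z0 = 1" using p0 by (auto simp: K_def y0_def z0_def mem_Times_iff)
  have ly: "(\<lambda>k. fst (F (r k))) \<longlonglongrightarrow> y0" unfolding y0_def using tendsto_fst[OF lim] by (simp add: o_def)
  have lz: "(\<lambda>k. snd (F (r k))) \<longlonglongrightarrow> z0" unfolding z0_def using tendsto_snd[OF lim] by (simp add: o_def)
  have zero: "z0 \<bullet> (mp l *v y0) = 0" if l: "l \<in> all_words N" for l
  proof -
    have bl: "bounded_linear (\<lambda>x. mp l *v x)" by (rule matrix_vector_mul_bounded_linear)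
    have t1: "(\<lambda>k. snd (F (r k)) \<bullet> (mp l *v fst (F (r k)))) \<longlonglongrightarrow> z0 \<bullet> (mp l *v y0)"
      by (intro tendsto_inner lz bounded_linear.tendsto[OF bl] ly)
    hence t2: "(\<lambda>k. \<bar>snd (F (r k)) \<bullet> (mp l *v fst (F (r k)))\<bar>) \<longlonglongrightarrow> \<bar>z0 \<bullet> (mp l *v y0)\<bar>"
      by (rule tendsto_rabs)
    have t3: "(\<lambda>k. 1 / (real k + 1)) \<longlonglongrightarrow> 0" using LIMSEQ_Suc[OF lim_1_over_n] by (simp add: add.commute)
    have ev: "\<forall>k\<ge>length l. \<bar>snd (F (r k)) \<bullet> (mp l *v fst (F (r k)))\<bar> \<le> 1 / (real k + 1)"
    proof (intro allI impI)
      fix k assume k: "length l \<le> k"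
      have rk: "k \<le> r k" using seq_suble[OF r] by simp
      have "\<bar>snd (F (r k)) \<bullet> (mp l *v fst (F (r k)))\<bar> < 1 / (real (r k) + 1)"
        using F[of "r k"] l k rk by auto
      also have "... \<le> 1 / (real k + 1)" using rk by (intro divide_left_mono) auto
      finally show "\<bar>snd (F (r k)) \<bullet> (mp l *v fst (F (r k)))\<bar> \<le> 1 / (real k + 1)" by simp
    qed
    have "\<bar>z0 \<bullet> (mp l *v y0)\<bar> \<le> 0" by (rule LIMSEQ_le[OF t2 t3]) (use ev in blast)
    thus ?thesis by simp
  qed
  define G where "G = {mp l *v y0 | l. l \<in> all_words N}"
  define L where "L = span G"
  have subL: "subspace L" unfolding L_def by (rule subspace_span)
  have y0L: "y0 \<in> L" unfolding L_def G_def
    by (rule span_base) (auto intro!: exI[of _ "[]"] simp: all_words_def)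
  have Lperp: "L \<subseteq> {x. z0 \<bullet> x = 0}" unfolding L_def
    by (rule span_minimal) (auto simp: G_def zero intro: subspace_hyperplane)
  have z0L: "z0 \<notin> L"
  proof
    assume "z0 \<in> L"
    hence "z0 \<bullet> z0 = 0" using Lperp by blast
    thus False using nz0 by (simp add: inner_eq_zero_iff)
  qed
  have inv: "(\<lambda>x. A i *v x) ` L \<subseteq> L" if i: "i < N" for i
  proof -
    define H where "H = {x. A i *v x \<in> L}"
    have sH: "subspace H" unfolding H_def subspace_def
      using subL by (auto simp: subspace_def matrix_vector_right_distrib matrix_vector_mult_scaleR)
    have GH: "G \<subseteq> H"
    proof
      fix x assume "x \<in> G"
      then obtain l where l: "l \<in> all_words N" "x = mp l *v y0" by (auto simp: G_def)
      have "A i *v x = mp (i#l) *v y0" using l by (simp add: matrix_vector_mul_assoc)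
      moreover have "i#l \<in> all_words N" using l i by (auto simp: all_words_def)
      ultimately have "A i *v x \<in> G" unfolding G_def by blast
      hence "A i *v x \<in> span G" by (rule span_base)
      thus "x \<in> H" unfolding H_def L_def by simp
    qed
    have "L \<subseteq> H" unfolding L_def by (rule span_minimal[OF GH sH])
    thus ?thesis by (auto simp: H_def)
  qed
  have d1: "dim L \<noteq> 0" using y0L ny0 by auto
  have d2: "dim L \<noteq> 2"
  proof
    assume "dim L = 2"
    moreover have "dim (UNIV :: (real^2) set) = 2" by simp
    ultimately have "L = UNIV"
      by (intro subspace_dim_equal[OF subL subspace_UNIV]) auto
    thus False using z0L by simp
  qed
  have "dim L \<le> 2" using dim_subset_UNIV_cart[of L] by simp
  hence "dim L = 1" using d1 d2 by linarith
  thus False using irr subL inv unfolding irreducible_tuple_def by blast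
qed

lemma irr_QM:
  assumes irr: "irreducible_tuple N A"
  shows QM
proof -
  obtain k c where c: "c > 0" and U: "\<And>y z::real^2. norm y = 1 \<Longrightarrow> norm z = 1 \<Longrightarrow>
           (\<exists>l\<in>all_words N. length l \<le> k \<and> c \<le> \<bar>z \<bullet> (mp l *v y)\<bar>)"
    using irr_unit[OF irr] by blast
  have "\<exists>l\<in>all_words N. length l \<le> k \<and> c * sv1 (mp w) * sv1 (mp v) \<le> sv1 (mp (w @ l @ v))"
    if w: "w \<in> all_words N" and v: "v \<in> all_words N" for w v
  proof -
    have pw: "sv1 (mp w) > 0" and pv: "sv1 (mp v) > 0" using sv_pos mp_det w v by auto
    obtain x where x: "norm x = 1" "norm (mp v *v x) = sv1 (mp v)" using sv1_attained by blast
    obtain x' where x': "norm x' = 1" "norm (mp w *v x') = sv1 (mp w)" using sv1_attained by blast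
    define y where "y = (1 / sv1 (mp v)) *\<^sub>R (mp v *v x)"
    define z0 where "z0 = (1 / sv1 (mp w)) *\<^sub>R (mp w *v x')"
    have ny: "norm y = 1" using x pv by (simp add: y_def)
    have nz0: "norm z0 = 1" using x' pw by (simp add: z0_def)
    define g where "g = z0 v* mp w"
    have gx: "g \<bullet> x' = sv1 (mp w)"
    proof -
      have "g \<bullet> x' = z0 \<bullet> (mp w *v x')" unfolding g_def by (rule dot_lmul_matrix)
      also have "... = (1 / sv1 (mp w)) * (norm (mp w *v x'))^2"
        by (simp add: z0_def power2_norm_eq_inner)
      finally show ?thesis using x' pw by (simp add: power2_eq_square)
    qed
    have ng: "norm g \<ge> sv1 (mp w)"
    proof -
      have "g \<bullet> x' \<le> norm g * norm x'" by (rule norm_cauchy_schwarz)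
      thus ?thesis using gx x' by simp
    qed
    hence g0: "norm g > 0" using pw by linarith
    define z where "z = (1 / norm g) *\<^sub>R g"
    have nz: "norm z = 1" using g0 by (simp add: z_def)
    obtain l where l: "l \<in> all_words N" "length l \<le> k" "c \<le> \<bar>z \<bullet> (mp l *v y)\<bar>" using U[OF ny nz] by blast
    have "mp (w @ l @ v) *v x = mp w *v (mp l *v (mp v *v x))"
      by (simp add: matprod_append matrix_vector_mul_assoc)
    also have "... = sv1 (mp v) *\<^sub>R (mp w *v (mp l *v y))"
      using pv by (simp add: y_def matrix_vector_mult_scaleR)
    finally have e: "mp (w @ l @ v) *v x = sv1 (mp v) *\<^sub>R (mp w *v (mp l *v y))" .
    have "z0 \<bullet> (mp (w @ l @ v) *v x) = sv1 (mp v) * (g \<bullet> (mp l *v y))"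
      unfolding e g_def by (simp add: dot_lmul_matrix)
    also have "... = sv1 (mp v) * norm g * (z \<bullet> (mp l *v y))"
      using g0 by (simp add: z_def)
    finally have e2: "z0 \<bullet> (mp (w @ l @ v) *v x) = sv1 (mp v) * norm g * (z \<bullet> (mp l *v y))" .
    have "c * sv1 (mp w) * sv1 (mp v) \<le> sv1 (mp v) * norm g * \<bar>z \<bullet> (mp l *v y)\<bar>"
    proof -
      have "c * sv1 (mp w) \<le> \<bar>z \<bullet> (mp l *v y)\<bar> * norm g"
        using l(3) ng c pw by (intro mult_mono) auto
      thus ?thesis using pv by (simp add: algebra_simps mult_left_mono)
    qed
    also have "... = \<bar>z0 \<bullet> (mp (w @ l @ v) *v x)\<bar>" using e2 pv by (simp add: abs_mult)
    also have "... \<le> sv1 (mp (w @ l @ v))" by (rule inner_mv_bound[OF nz0 x(1)])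
    finally show ?thesis using l by blast
  qed
  thus QM unfolding QM_def using c by blast
qed

end


definition perp :: "real^2 \<Rightarrow> real^2" where "perp u = vector [- u$2, u$1]"

locale unitvec =
  fixes u :: "real^2"
  assumes nu: "norm u = 1"
begin

abbreviation "pu \<equiv> perp u"

lemma u_sq: "(u$1)^2 + (u$2)^2 = 1" using nu norm2_sq[of u] by simp

lemma pu_comp: "pu$1 = - u$2" "pu$2 = u$1" by (simp_all add: perp_def)

lemma npu: "norm pu = 1" using u_sq by (simp add: norm2 pu_comp add.commute)

lemma u_pu: "u \<bullet> pu = 0" by (simp add: inner2 pu_comp algebra_simps)

lemma decomp: "x = (u \<bullet> x) *\<^sub>R u + (pu \<bullet> x) *\<^sub>R pu"
proof -
  have "(u \<bullet> x) * u$1 + (pu \<bullet> x) * pu$1 = x$1 * ((u$1)^2 + (u$2)^2)"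
    by (simp add: inner2 pu_comp algebra_simps power2_eq_square)
  moreover have "(u \<bullet> x) * u$2 + (pu \<bullet> x) * pu$2 = x$2 * ((u$1)^2 + (u$2)^2)"
    by (simp add: inner2 pu_comp algebra_simps power2_eq_square)
  ultimately show ?thesis using u_sq by (simp add: vec2_eq)
qed

definition al :: "mat2 \<Rightarrow> real" where "al M = u \<bullet> (M *v u)"
definition be :: "mat2 \<Rightarrow> real" where "be M = u \<bullet> (M *v pu)"
definition de :: "mat2 \<Rightarrow> real" where "de M = pu \<bullet> (M *v pu)"
definition Tri :: "mat2 \<Rightarrow> bool" where "Tri M \<longleftrightarrow> pu \<bullet> (M *v u) = 0"

lemma Tri_u: "Tri M \<Longrightarrow> M *v u = al M *\<^sub>R u"
  using decomp[of "M *v u"] by (simp add: Tri_def al_def)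

lemma Mpu: "M *v pu = be M *\<^sub>R u + de M *\<^sub>R pu"
  using decomp[of "M *v pu"] by (simp add: be_def de_def)

lemma Tri_mult: assumes "Tri P" "Tri Q"
  shows "Tri (P ** Q)" "al (P ** Q) = al P * al Q" "de (P ** Q) = de P * de Q"
    "be (P ** Q) = al P * be Q + be P * de Q"
proof -
  have e1: "(P ** Q) *v u = (al P * al Q) *\<^sub>R u"
    using Tri_u[OF assms(1)] Tri_u[OF assms(2)]
    by (simp add: matrix_vector_mul_assoc[symmetric] matrix_vector_mult_scaleR)
  have e2: "(P ** Q) *v pu = (al P * be Q + be P * de Q) *\<^sub>R u + (de P * de Q) *\<^sub>R pu"
    using Tri_u[OF assms(1)] Mpu[of Q] Mpu[of P]
    by (simp add: matrix_vector_mul_assoc[symmetric] matrix_vector_mult_scaleR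
        matrix_vector_right_distrib scaleR_add_right algebra_simps)
  have uu: "u \<bullet> u = 1" using nu by (simp add: dot_square_norm)
  have pp: "pu \<bullet> pu = 1" using npu by (simp add: dot_square_norm)
  have up: "pu \<bullet> u = 0" using u_pu by (simp add: inner_commute)
  show "Tri (P ** Q)" unfolding Tri_def e1 using up by simp
  show "al (P ** Q) = al P * al Q" unfolding al_def e1 using uu by simp
  show "de (P ** Q) = de P * de Q" unfolding de_def e2 using pp up by (simp add: inner_add_right)
  show "be (P ** Q) = al P * be Q + be P * de Q" unfolding be_def e2 using uu u_pu
    by (simp add: inner_add_right)
qed

lemma det_ident: "al M * de M - be M * (pu \<bullet> (M *v u)) = det M"
proof -
  have "al M * de M - be M * (pu \<bullet> (M *v u)) = det M * ((u$1)^2 + (u$2)^2)^2"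
    by (simp add: al_def de_def be_def inner2 mv2 pu_comp det_2 algebra_simps power2_eq_square)
  thus ?thesis using u_sq by simp
qed

lemma Tri_det: "Tri M \<Longrightarrow> det M = al M * de M"
  using det_ident[of M] by (simp add: Tri_def)

lemma Tri_sv1_le: assumes "Tri M" shows "sv1 M \<le> \<bar>al M\<bar> + \<bar>be M\<bar> + \<bar>de M\<bar>"
proof -
  obtain x :: "real^2" where x: "norm x = 1" "norm (M *v x) = sv1 M" using sv1_attained by blast
  have "M *v x = (u \<bullet> x) *\<^sub>R (M *v u) + (pu \<bullet> x) *\<^sub>R (M *v pu)"
    by (subst decomp[of x]) (simp add: matrix_vector_right_distrib matrix_vector_mult_scaleR)
  also have "... = ((u \<bullet> x) * al M) *\<^sub>R u + (pu \<bullet> x) *\<^sub>R (be M *\<^sub>R u + de M *\<^sub>R pu)"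
    using Tri_u[OF assms] Mpu[of M] by simp
  finally have e: "M *v x = ((u \<bullet> x) * al M) *\<^sub>R u + (pu \<bullet> x) *\<^sub>R (be M *\<^sub>R u + de M *\<^sub>R pu)" .
  have cu: "\<bar>u \<bullet> x\<bar> \<le> 1" using Cauchy_Schwarz_ineq2[of u x] nu x by simp
  have cp: "\<bar>pu \<bullet> x\<bar> \<le> 1" using Cauchy_Schwarz_ineq2[of pu x] npu x by simp
  have "norm (M *v x) \<le> norm (((u \<bullet> x) * al M) *\<^sub>R u) + norm ((pu \<bullet> x) *\<^sub>R (be M *\<^sub>R u + de M *\<^sub>R pu))"
    unfolding e by (rule norm_triangle_ineq)
  also have "... \<le> \<bar>al M\<bar> + (\<bar>be M\<bar> + \<bar>de M\<bar>)"
  proof (rule add_mono)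
    show "norm (((u \<bullet> x) * al M) *\<^sub>R u) \<le> \<bar>al M\<bar>"
      using nu cu by (simp add: abs_mult mult_left_le_one_le)
    have "norm (be M *\<^sub>R u + de M *\<^sub>R pu) \<le> \<bar>be M\<bar> + \<bar>de M\<bar>"
      using norm_triangle_ineq[of "be M *\<^sub>R u" "de M *\<^sub>R pu"] nu npu by simp
    thus "norm ((pu \<bullet> x) *\<^sub>R (be M *\<^sub>R u + de M *\<^sub>R pu)) \<le> \<bar>be M\<bar> + \<bar>de M\<bar>"
      using cp by (simp add: mult_le_one mult_left_le_one_le order_trans[OF mult_right_mono])
  qed
  finally show ?thesis using x by simp
qed

lemma de_le_sv1: "\<bar>de M\<bar> \<le> sv1 M"
  unfolding de_def by (rule inner_mv_bound[OF npu npu])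

lemma al_le_sv1: "\<bar>al M\<bar> \<le> sv1 M"
  unfolding al_def by (rule inner_mv_bound[OF nu nu])

end


lemma choose_pq:
  fixes ri rj :: real
  assumes "0 < rj" "rj \<le> 1" "1 \<le> ri"
  shows "\<exists>p q. p + q = n \<and> 1 / max ri (1/rj) \<le> rj^q * ri^p \<and> rj^q * ri^p \<le> max ri (1/rj)"
proof (induction n)
  case 0
  have "1 \<le> max ri (1/rj)" using assms by auto
  hence "1 / max ri (1/rj) \<le> 1" by simp
  thus ?case using \<open>1 \<le> max ri (1/rj)\<close> by (intro exI[of _ 0]) auto
next
  case (Suc n)
  then obtain p q where pq: "p + q = n" "1 / max ri (1/rj) \<le> rj^q * ri^p" "rj^q * ri^p \<le> max ri (1/rj)" by blast
  define R where "R = max ri (1/rj)"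
  have R1: "1 \<le> R" using assms by (auto simp: R_def)
  have rjR: "1 / R \<le> rj"
  proof -
    have "1/rj \<le> R" by (simp add: R_def)
    thus ?thesis using assms R1 by (simp add: field_simps)
  qed
  have riR: "ri \<le> R" by (simp add: R_def)
  define t where "t = rj^q * ri^p"
  have t0: "t > 0" using assms by (simp add: t_def)
  show ?case
  proof (cases "t \<ge> 1")
    case True
    have e: "rj^(Suc q) * ri^p = t * rj" by (simp add: t_def)
    have h1: "1 / R \<le> t * rj"
    proof -
      have "1 * rj \<le> t * rj" using mult_right_mono[OF True, of rj] assms(1) by simp
      thus ?thesis using rjR by linarith
    qed
    have h2: "t * rj \<le> R"
    proof -
      have "t * rj \<le> t * 1" using mult_left_mono[OF assms(2), of t] t0 by simp
      moreover have "t \<le> R" using pq(3) by (simp add: t_def R_def)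
      ultimately show ?thesis by linarith
    qed
    have g: "1 / R \<le> rj^(Suc q) * ri^p \<and> rj^(Suc q) * ri^p \<le> R" unfolding e using h1 h2 by simp
    have "p + Suc q = Suc n" using pq(1) by simp
    thus ?thesis using g unfolding R_def by blast
  next
    case False
    have e: "rj^q * ri^(Suc p) = t * ri" by (simp add: t_def algebra_simps)
    have h2: "t * ri \<le> R"
    proof -
      have "t * ri \<le> 1 * ri" using False assms(3) by (intro mult_right_mono) auto
      thus ?thesis using riR by linarith
    qed
    have h1: "1 / R \<le> t * ri"
    proof -
      have "t * 1 \<le> t * ri" using mult_left_mono[OF assms(3), of t] t0 by simp
      moreover have "1 / R \<le> t" using pq(2) by (simp add: t_def R_def)
      ultimately show ?thesis by linarith
    qed
    have g: "1 / R \<le> rj^q * ri^(Suc p) \<and> rj^q * ri^(Suc p) \<le> R" unfolding e using h1 h2 by simp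
    have "Suc p + q = Suc n" using pq(1) by simp
    thus ?thesis using g unfolding R_def by blast
  qed
qed

lemma poly_geom_small:
  fixes t K C M :: real
  assumes "0 < t" "t < 1" "K \<ge> 0" "C > 0" "M > 0"
  shows "\<exists>n. C * t^n * (1 + real n * K)^2 * M < 1"
proof -
  define r where "r = sqrt t"
  have r: "0 < r" "r < 1" using assms by (auto simp: r_def)
  have l1: "(\<lambda>n. r^n) \<longlonglongrightarrow> 0" using r by (intro LIMSEQ_power_zero) auto
  have l2: "(\<lambda>n. real n * r^n) \<longlonglongrightarrow> 0" using powser_times_n_limit_0[of r] r by simp
  have "(\<lambda>n. (r^n + K * (real n * r^n))^2) \<longlonglongrightarrow> (0 + K * 0)^2"
    by (intro tendsto_intros l1 l2)
  hence l3: "(\<lambda>n. (r^n + K * (real n * r^n))^2) \<longlonglongrightarrow> 0" by simp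
  have eq: "t^n * (1 + real n * K)^2 = (r^n + K * (real n * r^n))^2" for n
  proof -
    have r2: "r^2 = t" using assms by (simp add: r_def)
    have "(r^n)^2 = (r^2)^n" by (simp only: power_mult[symmetric] mult.commute)
    hence "t^n = (r^n)^2" using r2 by simp
    thus ?thesis by (simp add: power2_eq_square algebra_simps)
  qed
  have "1 / (C * M) > 0" using assms by simp
  then obtain no where "\<forall>n\<ge>no. norm ((r^n + K * (real n * r^n))^2 - 0) < 1 / (C * M)"
    using LIMSEQ_D[OF l3] by blast
  hence "\<bar>(r^no + K * (real no * r^no))^2 - 0\<bar> < 1 / (C * M)" by simp
  then obtain n where "\<bar>(r^n + K * (real n * r^n))^2 - 0\<bar> < 1 / (C * M)" by blast
  hence "t^n * (1 + real n * K)^2 < 1 / (C * M)" using eq[of n] by simp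
  hence "C * M * (t^n * (1 + real n * K)^2) < 1" using assms by (simp add: field_simps)
  thus ?thesis by (intro exI[of _ n]) (simp add: algebra_simps)
qed

locale redc = ifs2 + unitvec +
  assumes TriA: "\<And>i. i < N \<Longrightarrow> Tri (A i)"
begin

abbreviation "a i \<equiv> al (A i)"
abbreviation "b i \<equiv> be (A i)"
abbreviation "d i \<equiv> de (A i)"

lemma uu1: "u \<bullet> u = 1" using nu by (simp add: dot_square_norm)

lemma mat1_coeffs: "Tri (mat 1)" "al (mat 1) = 1" "de (mat 1) = 1" "be (mat 1) = 0"
  using uu1 u_pu npu by (simp_all add: Tri_def al_def de_def be_def dot_square_norm inner_commute)

lemma Tri_mp: "w \<in> all_words N \<Longrightarrow> Tri (mp w)"
proof (induction w)
  case Nil thus ?case using mat1_coeffs by simp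
next
  case (Cons i w) thus ?case using TriA Tri_mult(1) by (auto simp: all_words_def)
qed

lemma ad_ne0: "i < N \<Longrightarrow> a i \<noteq> 0 \<and> d i \<noteq> 0"
  using Tri_det[OF TriA] detA by fastforce

lemma mp_Cons_coeffs: assumes "i < N" "w \<in> all_words N"
  shows "al (mp (i#w)) = a i * al (mp w)" "de (mp (i#w)) = d i * de (mp w)"
    "be (mp (i#w)) = a i * be (mp w) + b i * de (mp w)"
  using Tri_mult[OF TriA[OF assms(1)] Tri_mp[OF assms(2)]] by simp_all

lemma mp_snoc_coeffs: assumes "i < N" "w \<in> all_words N"
  shows "al (mp (w@[i])) = al (mp w) * a i" "de (mp (w@[i])) = de (mp w) * d i"
    "be (mp (w@[i])) = al (mp w) * b i + be (mp w) * d i"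
  using Tri_mult[OF Tri_mp[OF assms(2)] TriA[OF assms(1)]] by (simp_all add: matprod_append)

lemma fin_img: "finite ((\<lambda>i. f i) ` {..<N})" "(\<lambda>i. f i) ` {..<N} \<noteq> {}" using N0 by auto

lemma case1: assumes H: "\<forall>i<N. \<bar>a i\<bar> < \<bar>d i\<bar>" shows QM
proof -
  define lam where "lam = Max ((\<lambda>i. \<bar>a i\<bar> / \<bar>d i\<bar>) ` {..<N})"
  define Bm where "Bm = Max ((\<lambda>i. \<bar>b i\<bar>) ` {..<N})"
  define dmn where "dmn = Min ((\<lambda>i. \<bar>d i\<bar>) ` {..<N})"
  have lam1: "lam < 1"
  proof -
    have "lam \<in> (\<lambda>i. \<bar>a i\<bar> / \<bar>d i\<bar>) ` {..<N}" unfolding lam_def by (rule Max_in[OF fin_img])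
    then obtain i where "i < N" "lam = \<bar>a i\<bar> / \<bar>d i\<bar>" by auto
    thus ?thesis using H ad_ne0 by (simp add: divide_less_eq)
  qed
  have lami: "\<bar>a i\<bar> \<le> lam * \<bar>d i\<bar>" if "i < N" for i
  proof -
    have "\<bar>a i\<bar> / \<bar>d i\<bar> \<le> lam" unfolding lam_def using that by (intro Max_ge) auto
    thus ?thesis using ad_ne0[OF that] by (simp add: divide_le_eq)
  qed
  have Bmi: "\<bar>b i\<bar> \<le> Bm" if "i < N" for i unfolding Bm_def using that by (intro Max_ge) auto
  have Bm0: "Bm \<ge> 0" using Bmi[of 0] N2 by fastforce
  have dmni: "dmn \<le> \<bar>d i\<bar>" if "i < N" for i unfolding dmn_def using that by (intro Min_le) auto
  have dmn0: "dmn > 0"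
  proof -
    have "dmn \<in> (\<lambda>i. \<bar>d i\<bar>) ` {..<N}" unfolding dmn_def by (rule Min_in[OF fin_img])
    thus ?thesis using ad_ne0 by auto
  qed
  define E where "E = Bm / (dmn * (1 - lam))"
  have E0: "E \<ge> 0" using Bm0 dmn0 lam1 by (simp add: E_def)
  have EB: "E * dmn * (1 - lam) = Bm" using dmn0 lam1 by (simp add: E_def)
  have lam0: "lam \<ge> 0"
  proof -
    have "\<bar>a 0\<bar> / \<bar>d 0\<bar> \<le> lam" unfolding lam_def using N2 by (intro Max_ge) auto
    moreover have "\<bar>a 0\<bar> / \<bar>d 0\<bar> \<ge> 0" by simp
    ultimately show ?thesis by linarith
  qed
  have bound: "\<bar>al (mp w)\<bar> \<le> \<bar>de (mp w)\<bar> \<and> \<bar>be (mp w)\<bar> \<le> E * \<bar>de (mp w)\<bar>" if "w \<in> all_words N" for w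
    using that
  proof (induction w)
    case Nil thus ?case using mat1_coeffs E0 by simp
  next
    case (Cons i w)
    have i: "i < N" and w: "w \<in> all_words N" using Cons.prems by (auto simp: all_words_def)
    note IH = Cons.IH[OF w]
    note cf = mp_Cons_coeffs[OF i w]
    have A1: "\<bar>al (mp (i#w))\<bar> \<le> \<bar>de (mp (i#w))\<bar>"
      unfolding cf abs_mult using H i IH by (intro mult_mono) auto
    have "\<bar>be (mp (i#w))\<bar> \<le> \<bar>a i\<bar> * \<bar>be (mp w)\<bar> + \<bar>b i\<bar> * \<bar>de (mp w)\<bar>"
      unfolding cf by (metis abs_mult abs_triangle_ineq)
    also have "... \<le> (lam * \<bar>d i\<bar>) * (E * \<bar>de (mp w)\<bar>) + Bm * \<bar>de (mp w)\<bar>"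
      using lami[OF i] IH Bmi[OF i] lam0 E0 by (intro add_mono mult_mono) auto
    also have "... = (lam * \<bar>d i\<bar> * E + Bm) * \<bar>de (mp w)\<bar>" by (simp add: algebra_simps)
    also have "... \<le> (E * \<bar>d i\<bar>) * \<bar>de (mp w)\<bar>"
    proof (rule mult_right_mono)
      have "Bm \<le> E * \<bar>d i\<bar> * (1 - lam)" unfolding EB[symmetric]
        using dmni[OF i] E0 lam1 by (intro mult_right_mono mult_left_mono) auto
      thus "lam * \<bar>d i\<bar> * E + Bm \<le> E * \<bar>d i\<bar>" by (simp add: algebra_simps)
    qed simp
    also have "... = E * \<bar>de (mp (i#w))\<bar>" unfolding cf by (simp add: abs_mult)
    finally show ?case using A1 by simp
  qed
  have svb: "sv1 (mp w) \<le> (2 + E) * \<bar>de (mp w)\<bar>" if "w \<in> all_words N" for w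
    using Tri_sv1_le[OF Tri_mp[OF that]] bound[OF that] by (simp add: algebra_simps)
  define c where "c = 1 / (2 + E)^2"
  have c0: "c > 0" using E0 by (simp add: c_def)
  have "\<exists>l\<in>all_words N. length l \<le> 0 \<and> c * sv1 (mp w) * sv1 (mp v) \<le> sv1 (mp (w @ l @ v))"
    if w: "w \<in> all_words N" and v: "v \<in> all_words N" for w v
  proof (intro bexI[of _ "[]"] conjI)
    have "c * sv1 (mp w) * sv1 (mp v) = (sv1 (mp w) / (2 + E)) * (sv1 (mp v) / (2 + E))"
      by (simp add: c_def power2_eq_square)
    also have "... \<le> \<bar>de (mp w)\<bar> * \<bar>de (mp v)\<bar>"
      using svb[OF w] svb[OF v] E0 by (intro mult_mono) (auto simp: divide_le_eq sv1_nonneg mult.commute)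
    also have "... = \<bar>de (mp (w @ [] @ v))\<bar>"
      using Tri_mult(3)[OF Tri_mp[OF w] Tri_mp[OF v]] by (simp add: matprod_append abs_mult)
    also have "... \<le> sv1 (mp (w @ [] @ v))" by (rule de_le_sv1)
    finally show "c * sv1 (mp w) * sv1 (mp v) \<le> sv1 (mp (w @ [] @ v))" .
  qed (auto simp: all_words_def)
  thus QM unfolding QM_def using c0 by blast
qed

end


context redc begin

lemma case2: assumes H: "\<forall>i<N. \<bar>d i\<bar> < \<bar>a i\<bar>" shows QM
proof -
  define lam where "lam = Max ((\<lambda>i. \<bar>d i\<bar> / \<bar>a i\<bar>) ` {..<N})"
  define Bm where "Bm = Max ((\<lambda>i. \<bar>b i\<bar>) ` {..<N})"
  define amn where "amn = Min ((\<lambda>i. \<bar>a i\<bar>) ` {..<N})"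
  have lam1: "lam < 1"
  proof -
    have "lam \<in> (\<lambda>i. \<bar>d i\<bar> / \<bar>a i\<bar>) ` {..<N}" unfolding lam_def by (rule Max_in[OF fin_img])
    then obtain i where "i < N" "lam = \<bar>d i\<bar> / \<bar>a i\<bar>" by auto
    thus ?thesis using H ad_ne0 by (simp add: divide_less_eq)
  qed
  have lami: "\<bar>d i\<bar> \<le> lam * \<bar>a i\<bar>" if "i < N" for i
  proof -
    have "\<bar>d i\<bar> / \<bar>a i\<bar> \<le> lam" unfolding lam_def using that by (intro Max_ge) auto
    thus ?thesis using ad_ne0[OF that] by (simp add: divide_le_eq)
  qed
  have Bmi: "\<bar>b i\<bar> \<le> Bm" if "i < N" for i unfolding Bm_def using that by (intro Max_ge) auto
  have Bm0: "Bm \<ge> 0"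
  proof -
    have "\<bar>b 0\<bar> \<le> Bm" using Bmi N2 by simp
    thus ?thesis by linarith
  qed
  have amni: "amn \<le> \<bar>a i\<bar>" if "i < N" for i unfolding amn_def using that by (intro Min_le) auto
  have amn0: "amn > 0"
  proof -
    have "amn \<in> (\<lambda>i. \<bar>a i\<bar>) ` {..<N}" unfolding amn_def by (rule Min_in[OF fin_img])
    thus ?thesis using ad_ne0 by auto
  qed
  define E where "E = Bm / (amn * (1 - lam))"
  have E0: "E \<ge> 0" using Bm0 amn0 lam1 by (simp add: E_def)
  have EB: "E * amn * (1 - lam) = Bm" using amn0 lam1 by (simp add: E_def)
  have lam0: "lam \<ge> 0"
  proof -
    have "\<bar>d 0\<bar> / \<bar>a 0\<bar> \<le> lam" unfolding lam_def using N2 by (intro Max_ge) auto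
    moreover have "\<bar>d 0\<bar> / \<bar>a 0\<bar> \<ge> 0" by simp
    ultimately show ?thesis by linarith
  qed
  have bound: "\<bar>de (mp w)\<bar> \<le> \<bar>al (mp w)\<bar> \<and> \<bar>be (mp w)\<bar> \<le> E * \<bar>al (mp w)\<bar>" if "w \<in> all_words N" for w
    using that
  proof (induction w rule: rev_induct)
    case Nil thus ?case using mat1_coeffs E0 by simp
  next
    case (snoc i w)
    have i: "i < N" and w: "w \<in> all_words N" using snoc.prems by (auto simp: all_words_def)
    note IH = snoc.IH[OF w]
    note cf = mp_snoc_coeffs[OF i w]
    have A1: "\<bar>de (mp (w@[i]))\<bar> \<le> \<bar>al (mp (w@[i]))\<bar>"
      unfolding cf abs_mult using H i IH by (intro mult_mono) auto
    have "\<bar>be (mp (w@[i]))\<bar> \<le> \<bar>al (mp w)\<bar> * \<bar>b i\<bar> + \<bar>be (mp w)\<bar> * \<bar>d i\<bar>"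
      unfolding cf by (metis abs_mult abs_triangle_ineq)
    also have "... \<le> \<bar>al (mp w)\<bar> * Bm + (E * \<bar>al (mp w)\<bar>) * (lam * \<bar>a i\<bar>)"
      using lami[OF i] IH Bmi[OF i] lam0 E0 by (intro add_mono mult_mono) auto
    also have "... = (Bm + lam * \<bar>a i\<bar> * E) * \<bar>al (mp w)\<bar>" by (simp add: algebra_simps)
    also have "... \<le> (E * \<bar>a i\<bar>) * \<bar>al (mp w)\<bar>"
    proof (rule mult_right_mono)
      have "Bm \<le> E * \<bar>a i\<bar> * (1 - lam)" unfolding EB[symmetric]
        using amni[OF i] E0 lam1 by (intro mult_right_mono mult_left_mono) auto
      thus "Bm + lam * \<bar>a i\<bar> * E \<le> E * \<bar>a i\<bar>" by (simp add: algebra_simps)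
    qed simp
    also have "... = E * \<bar>al (mp (w@[i]))\<bar>" unfolding cf by (simp add: abs_mult algebra_simps)
    finally show ?case using A1 by simp
  qed
  have svb: "sv1 (mp w) \<le> (2 + E) * \<bar>al (mp w)\<bar>" if "w \<in> all_words N" for w
    using Tri_sv1_le[OF Tri_mp[OF that]] bound[OF that] by (simp add: algebra_simps)
  define c where "c = 1 / (2 + E)^2"
  have c0: "c > 0" using E0 by (simp add: c_def)
  have "\<exists>l\<in>all_words N. length l \<le> 0 \<and> c * sv1 (mp w) * sv1 (mp v) \<le> sv1 (mp (w @ l @ v))"
    if w: "w \<in> all_words N" and v: "v \<in> all_words N" for w v
  proof (intro bexI[of _ "[]"] conjI)
    have "c * sv1 (mp w) * sv1 (mp v) = (sv1 (mp w) / (2 + E)) * (sv1 (mp v) / (2 + E))"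
      by (simp add: c_def power2_eq_square)
    also have "... \<le> \<bar>al (mp w)\<bar> * \<bar>al (mp v)\<bar>"
      using svb[OF w] svb[OF v] E0 by (intro mult_mono) (auto simp: divide_le_eq sv1_nonneg mult.commute)
    also have "... = \<bar>al (mp (w @ [] @ v))\<bar>"
      using Tri_mult(2)[OF Tri_mp[OF w] Tri_mp[OF v]] by (simp add: matprod_append abs_mult)
    also have "... \<le> sv1 (mp (w @ [] @ v))" by (rule al_le_sv1)
    finally show "c * sv1 (mp w) * sv1 (mp v) \<le> sv1 (mp (w @ [] @ v))" .
  qed (auto simp: all_words_def)
  thus QM unfolding QM_def using c0 by blast
qed

lemma rep_coeffs: assumes i: "i < N"
  shows "al (mp (replicate p i)) = a i ^ p \<and> de (mp (replicate p i)) = d i ^ p"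
proof (induction p)
  case 0 thus ?case using mat1_coeffs by simp
next
  case (Suc p)
  have w: "replicate p i \<in> all_words N" using i by (auto simp: all_words_def)
  show ?case using mp_Cons_coeffs[OF i w] Suc by simp
qed

lemma rep_be_a: assumes i: "i < N" and le: "\<bar>d i\<bar> \<le> \<bar>a i\<bar>"
  shows "\<bar>be (mp (replicate p i))\<bar> \<le> real p * (\<bar>b i\<bar> / \<bar>a i\<bar>) * \<bar>a i\<bar> ^ p"
proof (induction p)
  case 0 thus ?case using mat1_coeffs by simp
next
  case (Suc p)
  have w: "replicate p i \<in> all_words N" using i by (auto simp: all_words_def)
  have an: "\<bar>a i\<bar> > 0" using ad_ne0[OF i] by simp
  define K where "K = \<bar>b i\<bar> / \<bar>a i\<bar>"
  have K0: "K \<ge> 0" by (simp add: K_def)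
  have bK: "\<bar>b i\<bar> = K * \<bar>a i\<bar>" using an by (simp add: K_def)
  have "\<bar>be (mp (replicate (Suc p) i))\<bar> = \<bar>a i * be (mp (replicate p i)) + b i * d i ^ p\<bar>"
    using mp_Cons_coeffs(3)[OF i w] rep_coeffs[OF i, of p] by simp
  also have "... \<le> \<bar>a i\<bar> * \<bar>be (mp (replicate p i))\<bar> + \<bar>b i\<bar> * \<bar>d i\<bar> ^ p"
    by (metis abs_mult abs_triangle_ineq power_abs)
  also have "... \<le> \<bar>a i\<bar> * (real p * K * \<bar>a i\<bar> ^ p) + (K * \<bar>a i\<bar>) * \<bar>a i\<bar> ^ p"
  proof (rule add_mono)
    have IH: "\<bar>be (mp (replicate p i))\<bar> \<le> real p * K * \<bar>a i\<bar> ^ p" using Suc by (simp add: K_def)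
    show "\<bar>a i\<bar> * \<bar>be (mp (replicate p i))\<bar> \<le> \<bar>a i\<bar> * (real p * K * \<bar>a i\<bar> ^ p)"
      by (rule mult_left_mono[OF IH]) simp
    have "\<bar>d i\<bar> ^ p \<le> \<bar>a i\<bar> ^ p" by (rule power_mono[OF le]) simp
    thus "\<bar>b i\<bar> * \<bar>d i\<bar> ^ p \<le> (K * \<bar>a i\<bar>) * \<bar>a i\<bar> ^ p"
      unfolding bK using K0 an by (intro mult_left_mono) auto
  qed
  also have "... = real (Suc p) * K * \<bar>a i\<bar> ^ Suc p" by (simp add: algebra_simps)
  finally show ?case by (simp add: K_def)
qed

lemma rep_be_d: assumes j: "j < N" and le: "\<bar>a j\<bar> \<le> \<bar>d j\<bar>"
  shows "\<bar>be (mp (replicate q j))\<bar> \<le> real q * (\<bar>b j\<bar> / \<bar>d j\<bar>) * \<bar>d j\<bar> ^ q"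
proof (induction q)
  case 0 thus ?case using mat1_coeffs by simp
next
  case (Suc q)
  have w: "replicate q j \<in> all_words N" using j by (auto simp: all_words_def)
  have dn: "\<bar>d j\<bar> > 0" using ad_ne0[OF j] by simp
  define K where "K = \<bar>b j\<bar> / \<bar>d j\<bar>"
  have K0: "K \<ge> 0" by (simp add: K_def)
  have bK: "\<bar>b j\<bar> = K * \<bar>d j\<bar>" using dn by (simp add: K_def)
  have "\<bar>be (mp (replicate (Suc q) j))\<bar> = \<bar>a j * be (mp (replicate q j)) + b j * d j ^ q\<bar>"
    using mp_Cons_coeffs(3)[OF j w] rep_coeffs[OF j, of q] by simp
  also have "... \<le> \<bar>a j\<bar> * \<bar>be (mp (replicate q j))\<bar> + \<bar>b j\<bar> * \<bar>d j\<bar> ^ q"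
    by (metis abs_mult abs_triangle_ineq power_abs)
  also have "... \<le> \<bar>d j\<bar> * (real q * K * \<bar>d j\<bar> ^ q) + (K * \<bar>d j\<bar>) * \<bar>d j\<bar> ^ q"
  proof (rule add_mono)
    have IH: "\<bar>be (mp (replicate q j))\<bar> \<le> real q * K * \<bar>d j\<bar> ^ q" using Suc by (simp add: K_def)
    show "\<bar>a j\<bar> * \<bar>be (mp (replicate q j))\<bar> \<le> \<bar>d j\<bar> * (real q * K * \<bar>d j\<bar> ^ q)"
      using IH le K0 by (intro mult_mono) auto
    show "\<bar>b j\<bar> * \<bar>d j\<bar> ^ q \<le> (K * \<bar>d j\<bar>) * \<bar>d j\<bar> ^ q" unfolding bK by simp
  qed
  also have "... = real (Suc q) * K * \<bar>d j\<bar> ^ Suc q" by (simp add: algebra_simps)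
  finally show ?case by (simp add: K_def)
qed

end


context redc begin

lemma case3:
  assumes dom: "dominated N A" and i: "i < N" "\<bar>d i\<bar> \<le> \<bar>a i\<bar>" and j: "j < N" "\<bar>a j\<bar> \<le> \<bar>d j\<bar>"
  shows False
proof -
  obtain C \<tau> where C: "C > 0" and tau: "0 < \<tau>" "\<tau> < 1"
    and D: "\<And>w. w \<in> all_words N \<Longrightarrow> sv2 (mp w) \<le> C * \<tau> ^ length w * sv1 (mp w)"
    using dom unfolding dominated_def by blast
  have ai: "\<bar>a i\<bar> > 0" "\<bar>d i\<bar> > 0" and aj: "\<bar>a j\<bar> > 0" "\<bar>d j\<bar> > 0" using ad_ne0 i j by auto
  define ri where "ri = \<bar>a i\<bar> / \<bar>d i\<bar>"
  define rj where "rj = \<bar>a j\<bar> / \<bar>d j\<bar>"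
  have ri1: "1 \<le> ri" using i ai by (simp add: ri_def)
  have rj: "0 < rj" "rj \<le> 1" using j aj by (auto simp: rj_def)
  define R where "R = max ri (1/rj)"
  have R1: "1 \<le> R" using ri1 by (simp add: R_def)
  define K where "K = max (\<bar>b i\<bar> / \<bar>a i\<bar>) (\<bar>b j\<bar> / \<bar>d j\<bar>)"
  have K0: "K \<ge> 0" unfolding K_def by (simp add: le_max_iff_disj)
  define M where "M = (R + 1)^2 * R"
  have M0: "M > 0" using R1 by (simp add: M_def)
  obtain n where n: "C * \<tau>^n * (1 + real n * K)^2 * M < 1"
    using poly_geom_small[OF tau K0 C M0] by blast
  obtain p q where pq: "p + q = n" "1 / R \<le> rj^q * ri^p" "rj^q * ri^p \<le> R"
    using choose_pq[OF rj ri1, of n] unfolding R_def by blast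
  define W where "W = replicate q j @ replicate p i"
  have Ww: "W \<in> all_words N" using i j by (auto simp: W_def all_words_def)
  have lW: "length W = n" using pq by (simp add: W_def)
  define X where "X = mp (replicate q j)"
  define Y where "Y = mp (replicate p i)"
  have Xw: "replicate q j \<in> all_words N" and Yw: "replicate p i \<in> all_words N"
    using i j by (auto simp: all_words_def)
  have mW: "mp W = X ** Y" by (simp add: W_def X_def Y_def matprod_append)
  note TXY = Tri_mult[OF Tri_mp[OF Xw] Tri_mp[OF Yw], folded X_def Y_def]
  note cX = rep_coeffs[OF j(1), of q, folded X_def]
  note cY = rep_coeffs[OF i(1), of p, folded Y_def]
  note cX1 = conjunct1[OF cX] and cX2 = conjunct2[OF cX] and cY1 = conjunct1[OF cY] and cY2 = conjunct2[OF cY]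
  define al' where "al' = \<bar>al (mp W)\<bar>"
  define de' where "de' = \<bar>de (mp W)\<bar>"
  define t where "t = rj^q * ri^p"
  have al'e: "al' = \<bar>a j\<bar>^q * \<bar>a i\<bar>^p" unfolding al'_def mW TXY(2) cX1 cY1 by (simp add: abs_mult power_abs)
  have de'e: "de' = \<bar>d j\<bar>^q * \<bar>d i\<bar>^p" unfolding de'_def mW TXY(3) cX2 cY2 by (simp add: abs_mult power_abs)
  have de'0: "de' > 0" using ai aj by (simp add: de'e)
  have alt: "al' = t * de'"
    unfolding al'e de'e t_def ri_def rj_def using ai aj by (simp add: power_divide field_simps)
  have t0: "t > 0" using rj ri1 by (simp add: t_def)
  have beb: "\<bar>be (mp W)\<bar> \<le> real n * K * (al' + de')"
  proof -
    have "\<bar>be (mp W)\<bar> = \<bar>a j ^ q * be Y + be X * d i ^ p\<bar>" unfolding mW TXY(4) cX1 cY2 by simp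
    also have "... \<le> \<bar>a j\<bar>^q * \<bar>be Y\<bar> + \<bar>be X\<bar> * \<bar>d i\<bar>^p"
      by (metis abs_mult abs_triangle_ineq power_abs)
    also have "... \<le> \<bar>a j\<bar>^q * (real p * K * \<bar>a i\<bar>^p) + (real q * K * \<bar>d j\<bar>^q) * \<bar>d i\<bar>^p"
    proof (rule add_mono)
      have "\<bar>be Y\<bar> \<le> real p * (\<bar>b i\<bar> / \<bar>a i\<bar>) * \<bar>a i\<bar>^p" unfolding Y_def by (rule rep_be_a[OF i])
      also have "... \<le> real p * K * \<bar>a i\<bar>^p" by (intro mult_right_mono mult_left_mono) (auto simp: K_def)
      finally show "\<bar>a j\<bar>^q * \<bar>be Y\<bar> \<le> \<bar>a j\<bar>^q * (real p * K * \<bar>a i\<bar>^p)" by (simp add: mult_left_mono)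
      have "\<bar>be X\<bar> \<le> real q * (\<bar>b j\<bar> / \<bar>d j\<bar>) * \<bar>d j\<bar>^q" unfolding X_def by (rule rep_be_d[OF j])
      also have "... \<le> real q * K * \<bar>d j\<bar>^q" by (intro mult_right_mono mult_left_mono) (auto simp: K_def)
      finally show "\<bar>be X\<bar> * \<bar>d i\<bar>^p \<le> (real q * K * \<bar>d j\<bar>^q) * \<bar>d i\<bar>^p" by (simp add: mult_right_mono)
    qed
    also have "... = real p * K * al' + real q * K * de'" by (simp add: al'e de'e algebra_simps)
    also have "... \<le> real n * K * al' + real n * K * de'"
      using pq(1) K0 de'0 by (intro add_mono mult_right_mono mult_mono) (auto simp: al'_def)
    finally show ?thesis by (simp add: algebra_simps)
  qed
  have s1b: "sv1 (mp W) \<le> (1 + real n * K) * (t + 1) * de'"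
  proof -
    have "sv1 (mp W) \<le> al' + \<bar>be (mp W)\<bar> + de'"
      using Tri_sv1_le[OF Tri_mp[OF Ww]] by (simp add: al'_def de'_def)
    also have "... \<le> (1 + real n * K) * (al' + de')" using beb by (simp add: algebra_simps)
    also have "... = (1 + real n * K) * (t + 1) * de'" by (simp add: alt algebra_simps)
    finally show ?thesis .
  qed
  have dW: "det (mp W) \<noteq> 0" using mp_det[OF Ww] by simp
  have "al' * de' = sv1 (mp W) * sv2 (mp W)"
    using sv_prod[of "mp W"] Tri_det[OF Tri_mp[OF Ww]] by (simp add: al'_def de'_def abs_mult)
  also have "... \<le> sv1 (mp W) * (C * \<tau>^n * sv1 (mp W))"
    using D[OF Ww] lW by (intro mult_left_mono) (auto simp: sv1_nonneg)
  also have "... = C * \<tau>^n * (sv1 (mp W))^2" by (simp add: power2_eq_square)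
  also have "... \<le> C * \<tau>^n * ((1 + real n * K) * (t + 1) * de')^2"
    using s1b C tau by (intro mult_left_mono power_mono) (auto simp: sv1_nonneg)
  finally have "t * de'^2 \<le> (C * \<tau>^n * (1 + real n * K)^2 * (t + 1)^2) * de'^2"
    by (simp add: alt power2_eq_square algebra_simps)
  hence tb: "t \<le> C * \<tau>^n * (1 + real n * K)^2 * (t + 1)^2" using de'0 by simp
  have G0: "C * \<tau>^n * (1 + real n * K)^2 \<ge> 0" using C tau by simp
  have "(t + 1)^2 \<le> (R + 1)^2" using pq(3) t0 by (intro power_mono) (auto simp: t_def)
  hence "t \<le> C * \<tau>^n * (1 + real n * K)^2 * (R + 1)^2"
    using tb G0 by (meson mult_left_mono order_trans)
  hence "R * t \<le> R * (C * \<tau>^n * (1 + real n * K)^2 * (R + 1)^2)" using R1 by (simp add: mult_left_mono)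
  moreover have "1 \<le> R * t" using pq(2) R1 by (simp add: t_def field_simps)
  ultimately have "1 \<le> C * \<tau>^n * (1 + real n * K)^2 * M" by (simp add: M_def algebra_simps)
  thus False using n by simp
qed

end


context ifs2 begin

lemma red_QM: assumes dom: "dominated N A" and nirr: "\<not> irreducible_tuple N A" shows QM
proof -
  obtain L :: "(real^2) set" where sL: "subspace L" and dL: "dim L = 1"
    and inv: "\<forall>i<N. (\<lambda>x. A i *v x) ` L \<subseteq> L"
    using nirr unfolding irreducible_tuple_def by blast
  have "\<not> L \<subseteq> {0}" using dL dim_eq_0[of L] by auto
  then obtain x where xL: "x \<in> L" and x0: "x \<noteq> 0" by blast
  define u where "u = (1 / norm x) *\<^sub>R x"
  have uL: "u \<in> L" unfolding u_def by (rule subspace_scale[OF sL xL])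
  have nu: "norm u = 1" using x0 by (simp add: u_def)
  have spanu: "span {u} = L"
  proof (rule subspace_dim_equal[OF subspace_span sL])
    show "span {u} \<subseteq> L" using uL sL by (simp add: span_minimal)
    show "dim L \<le> dim (span {u})" using dL nu by auto
  qed
  interpret unitvec u using nu by unfold_locales
  have TriA: "Tri (A i)" if i: "i < N" for i
  proof -
    have "A i *v u \<in> L" using inv i uL by blast
    hence "A i *v u \<in> span {u}" using spanu by simp
    then obtain k where k: "A i *v u = k *\<^sub>R u" by (auto simp: span_singleton)
    show ?thesis unfolding Tri_def k using u_pu by (simp add: inner_commute)
  qed
  interpret redc N A u using TriA by unfold_locales
  show QM
  proof (cases "\<forall>i<N. \<bar>a i\<bar> < \<bar>d i\<bar>")
    case True thus QM by (rule case1)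
  next
    case F1: False
    show QM
    proof (cases "\<forall>i<N. \<bar>d i\<bar> < \<bar>a i\<bar>")
      case True thus QM by (rule case2)
    next
      case False
      obtain i where i: "i < N" "\<bar>d i\<bar> \<le> \<bar>a i\<bar>" using F1 by (auto simp: not_less)
      obtain j where j: "j < N" "\<bar>a j\<bar> \<le> \<bar>d j\<bar>" using False by (auto simp: not_less)
      show QM using case3[OF dom i j] by simp
    qed
  qed
qed

lemma Z_bounded_main: assumes "dominated N A \<or> irreducible_tuple N A"
  shows "affinity_dim N A \<ge> 0 \<and> (\<exists>C. \<forall>n. Z (affinity_dim N A) n \<le> C)"
proof -
  have qm: QM using assms irr_QM red_QM by blast
  interpret ifs3 N A
    by unfold_locales (rule QM_supmult[OF qm])
  show ?thesis by (rule Z_bounded_dim)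
qed

end


lemma diam_pow_nonneg: "diam_pow s U \<ge> 0" by (simp add: diam_pow_def)

lemma diam_pow_le:
  assumes "bounded U" "diameter U \<le> D" "D > 0" "s \<ge> 0"
  shows "diam_pow s U \<le> D powr s"
proof -
  have d0: "0 \<le> diameter U" by (rule diameter_ge_0[OF assms(1)])
  show ?thesis
  proof (cases "U = {}")
    case True thus ?thesis by (simp add: diam_pow_def)
  next
    case False
    show ?thesis
    proof (cases "s = 0")
      case True thus ?thesis using False assms by (simp add: diam_pow_def)
    next
      case F2: False
      thus ?thesis using False d0 assms by (simp add: diam_pow_def powr_mono2)
    qed
  qed
qed

lemma interval_cover:
  fixes a h z :: real and K :: nat
  assumes h: "h > 0" and K: "K \<ge> 1" and z: "a \<le> z" "z \<le> a + 2 * real K * h"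
  shows "\<exists>k<K. a + 2 * real k * h \<le> z \<and> z \<le> a + 2 * real (Suc k) * h"
proof -
  define q where "q = (z - a) / (2 * h)"
  have q0: "q \<ge> 0" using z h by (simp add: q_def)
  have qK: "q \<le> real K" using z h by (simp add: q_def field_simps)
  define m where "m = nat \<lfloor>q\<rfloor>"
  have m1: "real m \<le> q" using q0 by (simp add: m_def)
  have m2: "q < real m + 1" using q0 by (simp add: m_def)
  have zq: "z = a + 2 * q * h" using h by (simp add: q_def field_simps)
  show ?thesis
  proof (cases "m \<le> K - 1")
    case True
    hence "m < K" using K by simp
    moreover have "a + 2 * real m * h \<le> z" unfolding zq using m1 h by (simp add: mult_right_mono)
    moreover have "z \<le> a + 2 * real (Suc m) * h" unfolding zq using m2 h by (simp add: mult_right_mono)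
    ultimately show ?thesis by blast
  next
    case False
    hence "real m \<ge> real K" by simp
    hence qe: "q = real K" using m1 qK by simp
    have "K - 1 < K" using K by simp
    moreover have "a + 2 * real (K - 1) * h \<le> z" unfolding zq qe using h K by (simp add: of_nat_diff)
    moreover have "z \<le> a + 2 * real (Suc (K - 1)) * h" unfolding zq qe using K by simp
    ultimately show ?thesis by blast
  qed
qed

context unitvec begin

lemma norm_sq_decomp: "(norm x)^2 = (u \<bullet> x)^2 + (pu \<bullet> x)^2"
proof -
  have "(u \<bullet> x)^2 + (pu \<bullet> x)^2 = ((x$1)^2 + (x$2)^2) * ((u$1)^2 + (u$2)^2)"
    by (simp add: inner2 pu_comp algebra_simps power2_eq_square)
  thus ?thesis using u_sq by (simp add: norm2_sq)
qed

end

lemma perp_scale: "perp (c *\<^sub>R x) = c *\<^sub>R perp x"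
  by (simp add: perp_def vec2_eq)

lemma perp_det_ident: fixes M :: mat2 assumes "norm e = 1"
  shows "(M *v perp e) \<bullet> perp (M *v e) = det M" "(M *v e) \<bullet> perp (M *v e) = 0"
proof -
  interpret unitvec e using assms by unfold_locales
  have "(M *v perp e) \<bullet> perp (M *v e) = det M * ((e$1)^2 + (e$2)^2)"
    by (simp add: inner2 mv2 perp_def det_2 algebra_simps power2_eq_square)
  thus "(M *v perp e) \<bullet> perp (M *v e) = det M" using u_sq by simp
  show "(M *v e) \<bullet> perp (M *v e) = 0" by (simp add: inner2 perp_def algebra_simps)
qed

lemma rect_bound:
  fixes M :: mat2
  assumes d: "det M \<noteq> 0" and e: "norm e = 1" "norm (M *v e) = sv1 M" and R: "norm x \<le> R"
  defines "w1 \<equiv> (1 / sv1 M) *\<^sub>R (M *v e)"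
  shows "\<bar>w1 \<bullet> (M *v x)\<bar> \<le> sv1 M * R" "\<bar>perp w1 \<bullet> (M *v x)\<bar> \<le> sv2 M * R" "norm w1 = 1"
proof -
  have p1: "sv1 M > 0" using sv_pos[OF d] by simp
  show nw: "norm w1 = 1" using e p1 by (simp add: w1_def)
  show "\<bar>w1 \<bullet> (M *v x)\<bar> \<le> sv1 M * R"
  proof -
    have "\<bar>w1 \<bullet> (M *v x)\<bar> \<le> norm w1 * norm (M *v x)" by (rule Cauchy_Schwarz_ineq2)
    also have "... \<le> sv1 M * norm x" using nw sv1_bound[of M x] by simp
    also have "... \<le> sv1 M * R" using R p1 by (simp add: mult_left_mono)
    finally show ?thesis .
  qed
  interpret unitvec e using e(1) by unfold_locales
  have Mx: "M *v x = (e \<bullet> x) *\<^sub>R (M *v e) + (perp e \<bullet> x) *\<^sub>R (M *v perp e)"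
    by (subst decomp[of x]) (simp add: matrix_vector_right_distrib matrix_vector_mult_scaleR)
  have "perp w1 \<bullet> (M *v x) = (perp e \<bullet> x) * (det M / sv1 M)"
    unfolding Mx w1_def perp_scale using perp_det_ident[OF e(1), of M]
    by (simp add: inner_add_right inner_commute)
  hence "\<bar>perp w1 \<bullet> (M *v x)\<bar> = \<bar>perp e \<bullet> x\<bar> * sv2 M"
    using sv2_det[OF d] p1 by (simp add: abs_mult)
  also have "... \<le> R * sv2 M"
  proof (rule mult_right_mono)
    have "\<bar>perp e \<bullet> x\<bar> \<le> norm (perp e) * norm x" by (rule Cauchy_Schwarz_ineq2)
    thus "\<bar>perp e \<bullet> x\<bar> \<le> R" using npu R by simp
  qed (simp add: sv2_nonneg)
  finally show "\<bar>perp w1 \<bullet> (M *v x)\<bar> \<le> sv2 M * R" by (simp add: mult.commute)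
qed


lemma svf_ge_s1: fixes M :: mat2 assumes d: "det M \<noteq> 0" and s: "s > 1"
  shows "sv1 M * sv2 M powr (s - 1) \<le> svf s M"
proof (cases "s \<le> 2")
  case True thus ?thesis using s by (simp add: svf_def)
next
  case False
  have p1: "sv1 M > 0" and p2: "sv2 M > 0" using sv_pos[OF d] by auto
  define e where "e = s/2 - 1"
  have e0: "e \<ge> 0" using False by (simp add: e_def)
  have a: "sv1 M = sv1 M powr (s/2) / sv1 M powr e" using p1 by (simp add: e_def powr_diff[symmetric])
  have b: "sv2 M powr (s - 1) = sv2 M powr (s/2) * sv2 M powr e"
    using p2 by (simp add: e_def powr_add[symmetric])
  have c: "sv2 M powr e \<le> sv1 M powr e" by (rule powr_mono2[OF e0 _ sv2_le_sv1]) (use p2 in simp)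
  have "sv1 M * sv2 M powr (s - 1) = (sv1 M powr (s/2) * sv2 M powr (s/2)) * (sv2 M powr e / sv1 M powr e)"
    by (subst a, subst b) (simp add: field_simps)
  also have "... \<le> (sv1 M powr (s/2) * sv2 M powr (s/2)) * 1"
    using c p1 by (intro mult_left_mono) auto
  also have "... = svf s M" using False s p1 p2 by (simp add: svf_def powr_mult)
  finally show ?thesis by simp
qed

lemma word_cover:
  fixes M :: mat2 and t :: "real^2" and S :: "(real^2) set"
  assumes d: "det M \<noteq> 0" and R: "R > 0" and s: "s \<ge> 0"
    and S: "S \<subseteq> {M *v x + t | x. norm x \<le> R}"
  shows "\<exists>F. finite F \<and> S \<subseteq> \<Union>F \<and> (\<forall>U\<in>F. bounded U \<and> diameter U \<le> 3 * R * sv1 M) \<and>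
     (\<Sum>U\<in>F. diam_pow s U) \<le> (2 * (3*R) powr s + (2*R) powr s) * svf s M"
proof -
  define s1 where "s1 = sv1 M"
  define s2 where "s2 = sv2 M"
  have p1: "s1 > 0" and p2: "s2 > 0" using sv_pos[OF d] by (auto simp: s1_def s2_def)
  have s21: "s2 \<le> s1" by (simp add: s1_def s2_def sv2_le_sv1)
  have svf0: "svf s M \<ge> 0" using svf_pos[OF d] by (simp add: less_imp_le)
  have memS: "\<exists>x. norm x \<le> R \<and> y = M *v x + t" if "y \<in> S" for y using S that by blast
  have bS: "bounded S"
  proof (rule bounded_subset[OF bounded_cball])
    show "S \<subseteq> cball t (s1 * R)"
    proof
      fix y assume "y \<in> S"
      then obtain x where x: "norm x \<le> R" "y = M *v x + t" using memS by blast
      have "norm (M *v x) \<le> s1 * norm x" using sv1_bound by (simp add: s1_def)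
      also have "... \<le> s1 * R" using x p1 by (simp add: mult_left_mono)
      finally show "y \<in> cball t (s1 * R)" using x by (simp add: dist_norm)
    qed
  qed
  show ?thesis
  proof (cases "s \<le> 1")
    case True
    have dS: "diameter S \<le> 2 * R * s1"
    proof (rule diameter_le)
      show "S \<noteq> {} \<or> 0 \<le> 2 * R * s1" using R p1 by simp
      fix y y' assume "y \<in> S" "y' \<in> S"
      then obtain x x' where x: "norm x \<le> R" "y = M *v x + t" and x': "norm x' \<le> R" "y' = M *v x' + t"
        using memS by blast
      have "norm (y - y') = norm (M *v (x - x'))" using x x' by (simp add: matrix_vector_mult_diff_distrib)
      also have "... \<le> s1 * norm (x - x')" using sv1_bound by (simp add: s1_def)
      also have "... \<le> s1 * (2 * R)"
        using norm_triangle_ineq4[of x x'] x x' p1 by (intro mult_left_mono) auto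
      finally show "norm (y - y') \<le> 2 * R * s1" by (simp add: algebra_simps)
    qed
    have "diam_pow s S \<le> (2 * R * s1) powr s" by (rule diam_pow_le[OF bS dS]) (use R p1 s in auto)
    also have "... = (2*R) powr s * svf s M" using True R p1 by (simp add: svf_def s1_def powr_mult)
    also have "... \<le> (2 * (3*R) powr s + (2*R) powr s) * svf s M" using svf0 by (intro mult_right_mono) auto
    finally have sum: "diam_pow s S \<le> (2 * (3*R) powr s + (2*R) powr s) * svf s M" .
    have "3 * R * s1 \<ge> 2 * R * s1" using R p1 by simp
    thus ?thesis using sum dS bS by (intro exI[of _ "{S}"]) (auto simp: s1_def)
  next
    case False
    hence s1': "s > 1" by simp
    obtain e :: "real^2" where e: "norm e = 1" "norm (M *v e) = sv1 M" using sv1_attained by blast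
    define w1 where "w1 = (1 / sv1 M) *\<^sub>R (M *v e)"
    have nw1: "norm w1 = 1" using e p1 by (simp add: w1_def s1_def)
    interpret unitvec w1 using nw1 by unfold_locales
    have rb: "\<bar>w1 \<bullet> (y - t)\<bar> \<le> s1 * R \<and> \<bar>perp w1 \<bullet> (y - t)\<bar> \<le> s2 * R" if yS: "y \<in> S" for y
    proof -
      obtain x where x: "norm x \<le> R" "y = M *v x + t" using memS[OF yS] by blast
      show ?thesis using rect_bound[OF d e x(1)] x(2) by (simp add: w1_def s1_def s2_def)
    qed
    define h where "h = s2 * R"
    have h0: "h > 0" using p2 R by (simp add: h_def)
    define K where "K = nat \<lceil>s1 / s2\<rceil>"
    define q where "q = s1 / s2"
    have q0: "q > 0" using p1 p2 by (simp add: q_def)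
    have q1: "1 \<le> q" using s21 p2 by (simp add: q_def)
    have cq: "real_of_int \<lceil>q\<rceil> \<ge> q" by (rule le_of_int_ceiling)
    have cq2: "real_of_int \<lceil>q\<rceil> \<le> q + 1" by (rule of_int_ceiling_le_add_one)
    have c0: "\<lceil>q\<rceil> \<ge> 0" using cq q0 by linarith
    have rK: "real K = real_of_int \<lceil>q\<rceil>" unfolding K_def q_def[symmetric] using c0 by simp
    have "real K \<ge> q" using rK cq by linarith
    hence Kge: "real K \<ge> s1 / s2" by (simp add: q_def)
    have "real K \<le> 2 * q" using rK cq2 q1 by linarith
    hence Kle: "real K \<le> 2 * (s1 / s2)" by (simp add: q_def)
    have K1: "K \<ge> 1" using rK cq q1 by linarith
    define Q where "Q k = {y\<in>S. - s1 * R + 2 * real k * h \<le> w1 \<bullet> (y - t) \<and> w1 \<bullet> (y - t) \<le> - s1 * R + 2 * real (Suc k) * h}" for k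
    define F where "F = Q ` {..<K}"
    have cover: "S \<subseteq> \<Union>F"
    proof
      fix y assume y: "y \<in> S"
      have z1: "- s1 * R \<le> w1 \<bullet> (y - t)" and z2: "w1 \<bullet> (y - t) \<le> s1 * R" using rb[OF y] by auto
      have "s1 * R \<le> real K * s2 * R" using Kge p2 R by (simp add: divide_le_eq mult_right_mono)
      hence "w1 \<bullet> (y - t) \<le> - s1 * R + 2 * real K * h" using z2 by (simp add: h_def algebra_simps)
      then obtain k where "k < K" "- s1 * R + 2 * real k * h \<le> w1 \<bullet> (y - t)"
          "w1 \<bullet> (y - t) \<le> - s1 * R + 2 * real (Suc k) * h"
        using interval_cover[OF h0 K1 z1] by blast
      thus "y \<in> \<Union>F" using y by (auto simp: F_def Q_def)
    qed
    have diamQ: "diameter (Q k) \<le> 3 * h" for k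
    proof (rule diameter_le)
      show "Q k \<noteq> {} \<or> 0 \<le> 3 * h" using h0 by simp
      fix y y' assume y: "y \<in> Q k" and y': "y' \<in> Q k"
      have yS: "y \<in> S" "y' \<in> S" using y y' unfolding Q_def by blast+
      have a1: "\<bar>w1 \<bullet> (y - y')\<bar> \<le> 2 * h"
      proof -
        have "w1 \<bullet> (y - y') = w1 \<bullet> (y - t) - w1 \<bullet> (y' - t)" by (simp add: inner_diff_right)
        thus ?thesis using y y' by (auto simp: Q_def algebra_simps)
      qed
      have a2: "\<bar>perp w1 \<bullet> (y - y')\<bar> \<le> 2 * h"
      proof -
        have "perp w1 \<bullet> (y - y') = perp w1 \<bullet> (y - t) - perp w1 \<bullet> (y' - t)" by (simp add: inner_diff_right)
        thus ?thesis using rb[OF yS(1)] rb[OF yS(2)] unfolding h_def abs_le_iff by linarith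
      qed
      have "(norm (y - y'))^2 = (w1 \<bullet> (y - y'))^2 + (perp w1 \<bullet> (y - y'))^2" by (rule norm_sq_decomp)
      also have "... \<le> (2 * h)^2 + (2 * h)^2"
      proof (rule add_mono)
        have "\<bar>w1 \<bullet> (y - y')\<bar>^2 \<le> (2 * h)^2" by (rule power_mono[OF a1]) simp
        thus "(w1 \<bullet> (y - y'))^2 \<le> (2 * h)^2" by simp
        have "\<bar>perp w1 \<bullet> (y - y')\<bar>^2 \<le> (2 * h)^2" by (rule power_mono[OF a2]) simp
        thus "(perp w1 \<bullet> (y - y'))^2 \<le> (2 * h)^2" by simp
      qed
      also have "... \<le> (3 * h)^2" by (simp add: power2_eq_square)
      finally have "(norm (y - y'))^2 \<le> (3 * h)^2" .
      thus "norm (y - y') \<le> 3 * h" by (rule power2_le_imp_le) (use h0 in auto)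
    qed
    have bQ: "bounded (Q k)" for k by (rule bounded_subset[OF bS]) (auto simp: Q_def)
    have sumQ: "(\<Sum>U\<in>F. diam_pow s U) \<le> real K * (3 * h) powr s"
    proof -
      have "(\<Sum>U\<in>F. diam_pow s U) \<le> (\<Sum>k<K. diam_pow s (Q k))"
        unfolding F_def by (rule sum_image_le[of "{..<K}" "\<lambda>U. diam_pow s U" Q, unfolded o_def]) (simp_all add: diam_pow_nonneg)
      also have "... \<le> (\<Sum>k<K. (3 * h) powr s)"
        by (intro sum_mono diam_pow_le[OF bQ diamQ]) (use h0 s in auto)
      finally show ?thesis by simp
    qed
    have "real K * (3 * h) powr s = real K * s2 powr s * (3 * R) powr s"
      using p2 R by (simp add: h_def powr_mult algebra_simps)
    also have "... \<le> (2 * (s1 / s2)) * s2 powr s * (3 * R) powr s"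
      using Kle by (intro mult_right_mono) auto
    also have "... = 2 * (3 * R) powr s * (s1 * s2 powr (s - 1))"
      using p2 by (simp add: powr_diff field_simps)
    also have "... \<le> 2 * (3 * R) powr s * svf s M"
      using svf_ge_s1[OF d s1'] by (intro mult_left_mono) (auto simp: s1_def s2_def)
    also have "... \<le> (2 * (3*R) powr s + (2*R) powr s) * svf s M"
      using svf0 by (intro mult_right_mono) auto
    finally have "(\<Sum>U\<in>F. diam_pow s U) \<le> (2 * (3*R) powr s + (2*R) powr s) * svf s M"
      using sumQ by linarith
    moreover have "\<forall>U\<in>F. bounded U \<and> diameter U \<le> 3 * R * sv1 M"
    proof
      fix U assume "U \<in> F"
      then obtain k where "U = Q k" by (auto simp: F_def)
      moreover have "3 * h \<le> 3 * R * sv1 M" using s21 R by (simp add: h_def s1_def s2_def)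
      ultimately show "bounded U \<and> diameter U \<le> 3 * R * sv1 M" using bQ diamQ by (meson order_trans)
    qed
    moreover have "finite F" by (simp add: F_def)
    ultimately show ?thesis using cover by blast
  qed
qed


lemma sum_UN_le:
  fixes g :: "'b \<Rightarrow> real"
  assumes "finite I" "\<And>i. i \<in> I \<Longrightarrow> finite (F i)" "\<And>x. g x \<ge> 0"
  shows "sum g (\<Union>i\<in>I. F i) \<le> (\<Sum>i\<in>I. sum g (F i))"
  using assms
proof (induction I rule: finite_induct)
  case empty thus ?case by simp
next
  case (insert i I)
  have fi: "finite (F i)" and fU: "finite (\<Union>j\<in>I. F j)" using insert by auto
  have "sum g (\<Union>j\<in>insert i I. F j) = sum g (F i \<union> (\<Union>j\<in>I. F j))" by simp
  also have "... \<le> sum g (F i) + sum g (\<Union>j\<in>I. F j)"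
  proof -
    have "sum g (F i \<union> (\<Union>j\<in>I. F j)) + sum g (F i \<inter> (\<Union>j\<in>I. F j)) = sum g (F i) + sum g (\<Union>j\<in>I. F j)"
      by (rule sum.union_inter[OF fi fU])
    moreover have "sum g (F i \<inter> (\<Union>j\<in>I. F j)) \<ge> 0" using insert.prems(2) by (simp add: sum_nonneg)
    ultimately show ?thesis by linarith
  qed
  also have "... \<le> sum g (F i) + (\<Sum>j\<in>I. sum g (F j))" using insert by simp
  also have "... = (\<Sum>j\<in>insert i I. sum g (F j))" using insert by simp
  finally show ?case .
qed

lemma content_le_family:
  fixes E :: "'a::metric_space set"
  assumes fin: "finite Fm" and cov: "E \<subseteq> \<Union>Fm" and bd: "\<And>U. U \<in> Fm \<Longrightarrow> bounded U \<and> diameter U \<le> \<delta>"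
    and d0: "\<delta> \<ge> 0"
  shows "hausdorff_content s \<delta> E \<le> ennreal (\<Sum>U\<in>Fm. diam_pow s U)"
proof -
  obtain xs where xs: "set xs = Fm" "distinct xs" using finite_distinct_list[OF fin] by blast
  define U where "U n = (if n < length xs then xs ! n else {})" for n
  have mem: "U \<in> {U. E \<subseteq> (\<Union>n. U n) \<and> (\<forall>n. bounded (U n) \<and> diameter (U n) \<le> \<delta>)}"
  proof (intro CollectI conjI allI)
    show "E \<subseteq> (\<Union>n. U n)"
    proof
      fix x assume "x \<in> E"
      then obtain V where V: "V \<in> Fm" "x \<in> V" using cov by blast
      then obtain n where "n < length xs" "xs ! n = V" using xs(1) by (metis in_set_conv_nth)
      thus "x \<in> (\<Union>n. U n)" using V by (auto simp: U_def)
    qed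
    fix n
    show "bounded (U n)" using bd xs(1) by (auto simp: U_def)
    show "diameter (U n) \<le> \<delta>" using bd xs(1) d0 by (auto simp: U_def)
  qed
  have "(\<Sum>n. ennreal (diam_pow s (U n))) = (\<Sum>n\<in>{..<length xs}. ennreal (diam_pow s (U n)))"
    by (rule suminf_finite) (auto simp: U_def diam_pow_def)
  also have "... = ennreal (\<Sum>n<length xs. diam_pow s (U n))" by (simp add: diam_pow_nonneg)
  also have "(\<Sum>n<length xs. diam_pow s (U n)) = (\<Sum>n<length xs. diam_pow s (xs ! n))"
    by (simp add: U_def)
  also have "... = sum_list (map (diam_pow s) xs)"
    by (simp add: sum_list_sum_nth atLeast0LessThan)
  also have "... = (\<Sum>U\<in>Fm. diam_pow s U)"
    using sum.distinct_set_conv_list[OF xs(2), of "diam_pow s"] xs(1) by simp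
  finally have eq: "(\<Sum>n. ennreal (diam_pow s (U n))) = ennreal (\<Sum>U\<in>Fm. diam_pow s U)" .
  show ?thesis unfolding hausdorff_content_def
    by (rule INF_lower2[OF mem]) (simp add: eq)
qed

fun trv :: "(nat \<Rightarrow> mat2) \<Rightarrow> (nat \<Rightarrow> real^2) \<Rightarrow> nat list \<Rightarrow> real^2" where
  "trv A v [] = 0"
| "trv A v (i#w) = A i *v trv A v w + v i"

lemma iterate_cover:
  assumes Xeq: "X = (\<Union>i<N. (\<lambda>x. A i *v x + v i) ` X)"
  shows "X \<subseteq> (\<Union>w\<in>words N n. (\<lambda>x. matprod A w *v x + trv A v w) ` X)"
proof (induction n)
  case 0 thus ?case by (simp add: words_0)
next
  case (Suc n)
  show ?case
  proof
    fix y assume "y \<in> X"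
    then obtain i x where i: "i < N" and x: "x \<in> X" and y: "y = A i *v x + v i" using Xeq by blast
    obtain w x' where w: "w \<in> words N n" and x': "x' \<in> X" and xe: "x = matprod A w *v x' + trv A v w"
      using Suc x by blast
    have "y = matprod A (i#w) *v x' + trv A v (i#w)"
      by (simp add: y xe matrix_vector_right_distrib matrix_vector_mul_assoc add.assoc)
    moreover have "i#w \<in> words N (Suc n)" using i w by (auto simp: words_def)
    ultimately show "y \<in> (\<Union>w\<in>words N (Suc n). (\<lambda>x. matprod A w *v x + trv A v w) ` X)"
      using x' by blast
  qed
qed

theorem mainTheorem12:
  fixes N :: nat and A :: "nat \<Rightarrow> real^2^2" and v :: "nat \<Rightarrow> real^2"
    and X :: "(real^2) set"
  assumes "is_self_affine_set N A v X"
    and "dominated N A \<or> irreducible_tuple N A"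
  shows "hausdorff_measure (affinity_dim N A) X < \<infinity>"
proof -
  have aff: "affine_ifs N A v" and cX: "compact X" and Xeq: "X = (\<Union>i<N. (\<lambda>x. A i *v x + v i) ` X)"
    using assms(1) unfolding is_self_affine_set_def by blast+
  have N2: "N \<ge> 2" and invA: "\<And>i. i < N \<Longrightarrow> invertible (A i) \<and> opnorm (A i) < 1"
    using aff unfolding affine_ifs_def by blast+
  interpret ifs2 N A
  proof
    show "N \<ge> 2" by (rule N2)
    fix i assume i: "i < N"
    show "det (A i) \<noteq> 0" using invA[OF i] invertible_det_nz by blast
    show "sv1 (A i) < 1" using invA[OF i] sv1_le_opnorm[of "A i"] by linarith
  qed
  define s where "s = affinity_dim N A"
  obtain C where s0: "s \<ge> 0" and C: "\<And>n. Z s n \<le> C"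
    using Z_bounded_main[OF assms(2)] unfolding s_def by blast
  have C0: "C \<ge> 0" using C[of 0] Z_pos[of s 0] by linarith
  obtain R where R: "R > 0" "\<And>x. x \<in> X \<Longrightarrow> norm x \<le> R"
    using compact_imp_bounded[OF cX] unfolding bounded_pos by blast
  define Kc where "Kc = 2 * (3*R) powr s + (2*R) powr s"
  have Kc0: "Kc \<ge> 0" by (simp add: Kc_def)
  have content: "hausdorff_content s \<delta> X \<le> ennreal (Kc * C)" if d: "\<delta> > 0" for \<delta>
  proof -
    obtain n where n: "gam ^ n < \<delta> / (3 * R)"
      using real_arch_pow_inv[of "\<delta> / (3 * R)" gam] d R gam_props by auto
    have "\<forall>w\<in>words N n. \<exists>F. finite F \<and> (\<lambda>x. mp w *v x + trv A v w) ` X \<subseteq> \<Union>F \<and>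
       (\<forall>U\<in>F. bounded U \<and> diameter U \<le> 3 * R * sv1 (mp w)) \<and>
       (\<Sum>U\<in>F. diam_pow s U) \<le> Kc * svf s (mp w)"
    proof
      fix w assume w: "w \<in> words N n"
      have dw: "det (mp w) \<noteq> 0" using mp_det[OF words_in_all[OF w]] by simp
      show "\<exists>F. finite F \<and> (\<lambda>x. mp w *v x + trv A v w) ` X \<subseteq> \<Union>F \<and>
       (\<forall>U\<in>F. bounded U \<and> diameter U \<le> 3 * R * sv1 (mp w)) \<and>
       (\<Sum>U\<in>F. diam_pow s U) \<le> Kc * svf s (mp w)"
        unfolding Kc_def by (rule word_cover[OF dw R(1) s0]) (use R(2) in blast)
    qed
    then obtain Fw where Fw: "\<And>w. w \<in> words N n \<Longrightarrow> finite (Fw w) \<and> (\<lambda>x. mp w *v x + trv A v w) ` X \<subseteq> \<Union>(Fw w) \<and>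
       (\<forall>U\<in>Fw w. bounded U \<and> diameter U \<le> 3 * R * sv1 (mp w)) \<and>
       (\<Sum>U\<in>Fw w. diam_pow s U) \<le> Kc * svf s (mp w)"
      by metis
    define Fm where "Fm = (\<Union>w\<in>words N n. Fw w)"
    have finFm: "finite Fm" unfolding Fm_def using Fw by auto
    have covFm: "X \<subseteq> \<Union>Fm"
    proof
      fix x assume "x \<in> X"
      then obtain w where w: "w \<in> words N n" and "x \<in> (\<lambda>x. mp w *v x + trv A v w) ` X"
        using iterate_cover[OF Xeq, of n] by blast
      hence "x \<in> \<Union>(Fw w)" using Fw[OF w] by blast
      thus "x \<in> \<Union>Fm" using w by (auto simp: Fm_def)
    qed
    have bdFm: "bounded U \<and> diameter U \<le> \<delta>" if U: "U \<in> Fm" for U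
    proof -
      obtain w where w: "w \<in> words N n" and Uw: "U \<in> Fw w" using U by (auto simp: Fm_def)
      have b: "bounded U" and dU: "diameter U \<le> 3 * R * sv1 (mp w)" using Fw[OF w] Uw by auto
      have lw: "length w = n" using w by (simp add: words_def)
      have "3 * R * sv1 (mp w) \<le> 3 * R * gam ^ n"
        using mp_sv1[OF words_in_all[OF w]] lw R by simp
      also have "... \<le> \<delta>" using n R by (simp add: field_simps)
      finally show ?thesis using b dU by simp
    qed
    have "(\<Sum>U\<in>Fm. diam_pow s U) \<le> (\<Sum>w\<in>words N n. \<Sum>U\<in>Fw w. diam_pow s U)"
      unfolding Fm_def by (rule sum_UN_le) (use Fw diam_pow_nonneg in auto)
    also have "... \<le> (\<Sum>w\<in>words N n. Kc * svf s (mp w))" by (rule sum_mono) (use Fw in auto)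
    also have "... = Kc * Z s n" by (simp add: Z_def sum_distrib_left)
    also have "... \<le> Kc * C" by (rule mult_left_mono[OF C Kc0])
    finally have sumb: "(\<Sum>U\<in>Fm. diam_pow s U) \<le> Kc * C" .
    have "hausdorff_content s \<delta> X \<le> ennreal (\<Sum>U\<in>Fm. diam_pow s U)"
      by (rule content_le_family[OF finFm covFm bdFm]) (use d in auto)
    also have "... \<le> ennreal (Kc * C)" using sumb by (rule ennreal_leI)
    finally show ?thesis .
  qed
  have "hausdorff_measure s X \<le> ennreal (Kc * C)"
    unfolding hausdorff_measure_def by (rule SUP_least) (use content in auto)
  also have "... < \<infinity>" by simp
  finally show ?thesis by (simp add: s_def)
qed


end
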